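(* Let $L\ge 2$ be an integer and $\sigma_r>0$. Let $\Theta_1,\dots,\Theta_L$ be i.i.d. uniform on $[0,2\pi)$, and let $\angle_{(L-1)}$ be the second largest of the internodal angles $\angle_k=\Theta_{(k+1)}-\Theta_{(k)}$ ($1\le k<L$), $\angle_L=2\pi-(\Theta_{(L)}-\Theta_{(1)})$, where $\Theta_{(1)}\le\dots\le\Theta_{(L)}$ are the order statistics of the $\Theta_k$. Define $a=\sigma_r\sqrt{4/L}$ and the random variable $$S=\frac{a}{\sin(\angle_{(L-1)})}$$ (taking values in $[a,\infty]$). Then $S\ge a$ almost surely, and for every $s\ge a$, $$\mathrm{P}[S\le s]=\sum_{n=0}^{\mathcal{X}_2}(-1)^{n-1}\binom{L}{n}(n-1)\Big(1-\frac{n\varphi_2}{2\pi}\Big)^{L-1}-\sum_{n=0}^{\mathcal{X}_1}(-1)^{n-1}\binom{L}{n}(n-1)\Big(1-\frac{n\varphi_1}{2\pi}\Big)^{L-1},$$ where $\varphi_1=\sin^{-1}(a/s)$, $\varphi_2=\pi-\sin^{-1}(a/s)$, $\mathcal{X}_1=\min\{L,\lfloor 2\pi/\varphi_1\rfloor\}$ and $\mathcal{X}_2=\min\{L,\lfloor 2\pi/\varphi_2\rfloor\}$.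
   Context: Here $\sin^{-1}$ denotes the principal arcsine with values in $[0,\pi/2]$ for arguments in $[0,1]$. The random variable $S$ is the paper's approximation of the square root of the Cramér–Rao lower bound for TOA localization with $L$ anchors at uniformly random angles around the target and common range-error standard deviation $\sigma_r$. *)

theory Defs
  imports "HOL-Probability.Probability"
begin

definition sorted_angles :: "nat \<Rightarrow> (nat \<Rightarrow> real) \<Rightarrow> real list" where
  "sorted_angles L th = sort (map th [0..<L])"

definition internodal_angles :: "nat \<Rightarrow> (nat \<Rightarrow> real) \<Rightarrow> real list" where
  "internodal_angles L th =
     (let xs = sorted_angles L th in
        map (\<lambda>k. xs ! (k + 1) - xs ! k) [0..<L - 1] @ [2 * pi - (last xs - hd xs)])"

text \<open>The (L-1)-th order statistic (i.e. the second largest) of the internodal angles.\<close>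
definition second_largest_angle :: "nat \<Rightarrow> (nat \<Rightarrow> real) \<Rightarrow> real" where
  "second_largest_angle L th = sort (internodal_angles L th) ! (L - 2)"

definition S_val :: "real \<Rightarrow> nat \<Rightarrow> (nat \<Rightarrow> real) \<Rightarrow> ereal" where
  "S_val a L th = (let t = sin (second_largest_angle L th) in
                     if t > 0 then ereal (a / t) else \<infinity>)"

definition cdf_sum :: "nat \<Rightarrow> real \<Rightarrow> real" where
  "cdf_sum L \<phi> = (\<Sum>n = 0..min L (nat \<lfloor>2 * pi / \<phi>\<rfloor>).
      (-1::real) powi (int n - 1) * real (L choose n) * (real n - 1)
        * (1 - real n * \<phi> / (2 * pi)) ^ (L - 1))"

end

theory Submission
  imports Defs
begin

definition fwd :: "real \<Rightarrow> real \<Rightarrow> real" where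
  "fwd u v = (if u \<le> v then v - u else v - u + 2 * pi)"

definition gapf :: "nat \<Rightarrow> (nat \<Rightarrow> real) \<Rightarrow> nat \<Rightarrow> real" where
  "gapf L th k = (let xs = sorted_angles L th in
     if k < L - 1 then xs ! (k + 1) - xs ! k else 2 * pi - (xs ! (L - 1) - xs ! 0))"

lemma length_sorted_angles[simp]: "length (sorted_angles L th) = L"
  by (simp add: sorted_angles_def)

lemma sorted_sorted_angles: "sorted (sorted_angles L th)"
  by (simp add: sorted_angles_def)

lemma set_sorted_angles: "set (sorted_angles L th) = th ` {..<L}"
  by (auto simp: sorted_angles_def)

lemma internodal_eq:
  assumes "L \<ge> 1"
  shows "internodal_angles L th = map (gapf L th) [0..<L]"
proof -
  define xs where "xs = sorted_angles L th"
  have l: "length xs = L" by (simp add: xs_def)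
  have "[0..<L] = [0..<L-1] @ [L-1]" using assms
    by (metis Suc_diff_1 less_le_trans upt_Suc_append zero_le zero_less_one)
  moreover have ne: "xs \<noteq> []" using l assms by auto
  moreover have "last xs = xs ! (L-1)" "hd xs = xs ! 0"
    by (simp_all add: last_conv_nth[OF ne] hd_conv_nth[OF ne] l)
  ultimately show ?thesis
    unfolding internodal_angles_def gapf_def Let_def xs_def[symmetric]
    by simp
qed

lemma sorted_angles_strict:
  assumes "inj_on th {..<L}" "i < j" "j < L"
  shows "sorted_angles L th ! i < sorted_angles L th ! j"
proof -
  define xs where "xs = sorted_angles L th"
  have d: "distinct xs" using assms(1) by (simp add: xs_def sorted_angles_def distinct_map
      atLeast0LessThan)
  have "xs ! i \<le> xs ! j" using assms sorted_sorted_angles[of L th]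
    by (intro sorted_nth_mono) (auto simp: xs_def)
  moreover have "xs ! i \<noteq> xs ! j" using d assms by (simp add: nth_eq_iff_index_eq xs_def)
  ultimately show ?thesis by (simp add: xs_def)
qed

lemma sorted_angles_range:
  assumes "\<And>k. k < L \<Longrightarrow> th k \<in> {0..<2*pi}" "k < L"
  shows "sorted_angles L th ! k \<in> {0..<2*pi}"
proof -
  have "sorted_angles L th ! k \<in> set (sorted_angles L th)" using assms by simp
  thus ?thesis using assms(1) by (auto simp: set_sorted_angles)
qed

lemma gap_char:
  assumes L: "L \<ge> 2" and rng: "\<And>k. k < L \<Longrightarrow> th k \<in> {0..<2*pi}"
    and inj: "inj_on th {..<L}" and k: "k < L"
  shows "(\<forall>m<L. m \<noteq> k \<longrightarrow> x < fwd (sorted_angles L th ! k) (sorted_angles L th ! m))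
         \<longleftrightarrow> x < gapf L th k"
proof -
  define xs where "xs = sorted_angles L th"
  have lt: "\<And>i j. i < j \<Longrightarrow> j < L \<Longrightarrow> xs ! i < xs ! j"
    using sorted_angles_strict[OF inj] by (simp add: xs_def)
  have r: "\<And>i. i < L \<Longrightarrow> xs ! i \<in> {0..<2*pi}"
    using sorted_angles_range[OF rng] by (simp add: xs_def)
  have ge: "gapf L th k \<le> fwd (xs ! k) (xs ! m)" if m: "m < L" "m \<noteq> k" for m
  proof (cases "k < L - 1")
    case True
    show ?thesis
    proof (cases "k < m")
      case True
      hence "xs ! (k+1) \<le> xs ! m" using m lt[of "k+1" m] by (cases "k + 1 = m") auto
      thus ?thesis using \<open>k < L - 1\<close> lt[OF True m(1)]
        by (simp add: gapf_def fwd_def xs_def[symmetric] Let_def)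
    next
      case False
      hence "m < k" using m by simp
      hence "xs ! m < xs ! k" using lt k by simp
      moreover have "xs ! m \<ge> 0" "xs ! (k+1) < 2 * pi" using r m \<open>k < L - 1\<close> by auto
      ultimately show ?thesis using \<open>k < L - 1\<close>
        by (simp add: gapf_def fwd_def xs_def[symmetric] Let_def)
    qed
  next
    case False
    hence kL: "k = L - 1" using k by simp
    hence "m < k" using m by simp
    hence "xs ! m < xs ! k" using lt k by simp
    moreover have "xs ! 0 \<le> xs ! m" using lt[of 0 m] m by (cases m) auto
    ultimately show ?thesis using kL
      by (simp add: gapf_def fwd_def xs_def[symmetric] Let_def)
  qed
  obtain m where m: "m < L" "m \<noteq> k" "fwd (xs ! k) (xs ! m) = gapf L th k"
  proof (cases "k < L - 1")
    case True
    have "xs ! k < xs ! (k+1)" using lt True by simp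
    thus ?thesis using True by (intro that[of "k+1"]) (auto simp: gapf_def fwd_def xs_def[symmetric] Let_def)
  next
    case False
    hence kL: "k = L - 1" using k by simp
    have "xs ! 0 < xs ! k" using lt[of 0 k] kL L by simp
    thus ?thesis using kL L by (intro that[of 0]) (auto simp: gapf_def fwd_def xs_def[symmetric] Let_def)
  qed
  show ?thesis
  proof
    assume "\<forall>m<L. m \<noteq> k \<longrightarrow> x < fwd (sorted_angles L th ! k) (sorted_angles L th ! m)"
    thus "x < gapf L th k" using m by (auto simp: xs_def)
  next
    assume "x < gapf L th k"
    thus "\<forall>m<L. m \<noteq> k \<longrightarrow> x < fwd (sorted_angles L th ! k) (sorted_angles L th ! m)"
      using ge by (auto simp: xs_def intro: less_le_trans)
  qed
qed

lemma count_gaps: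
  assumes L: "L \<ge> 2" and rng: "\<And>k. k < L \<Longrightarrow> th k \<in> {0..<2*pi}"
    and inj: "inj_on th {..<L}"
  shows "length (filter (\<lambda>g. x < g) (internodal_angles L th))
       = card {i. i < L \<and> (\<forall>j<L. j \<noteq> i \<longrightarrow> x < fwd (th i) (th j))}"
proof -
  define xs where "xs = sorted_angles L th"
  have d: "distinct xs" using inj by (simp add: xs_def sorted_angles_def distinct_map
      atLeast0LessThan)
  have l: "length xs = L" by (simp add: xs_def)
  have sx: "set xs = th ` {..<L}" by (simp add: xs_def set_sorted_angles)
  define B where "B = {v \<in> set xs. \<forall>w\<in>set xs. w \<noteq> v \<longrightarrow> x < fwd v w}"
  have "length (filter (\<lambda>g. x < g) (internodal_angles L th)) = card {k. k < L \<and> x < gapf L th k}"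
    using L apply (simp add: internodal_eq length_filter_conv_card)
    by (rule arg_cong[where f=card]) auto
  also have "{k. k < L \<and> x < gapf L th k} =
     {k. k < L \<and> (\<forall>m<L. m \<noteq> k \<longrightarrow> x < fwd (xs ! k) (xs ! m))}"
    using gap_char[OF L rng inj] by (auto simp: xs_def)
  also have "card \<dots> = card (nth xs ` \<dots>)"
    by (rule card_image[symmetric], rule inj_on_nth[OF d]) (auto simp: l)
  also have "nth xs ` {k. k < L \<and> (\<forall>m<L. m \<noteq> k \<longrightarrow> x < fwd (xs ! k) (xs ! m))} = B"
  proof (intro equalityI subsetI)
    fix v assume "v \<in> nth xs ` {k. k < L \<and> (\<forall>m<L. m \<noteq> k \<longrightarrow> x < fwd (xs ! k) (xs ! m))}"
    then obtain k where k: "k < L" "v = xs ! k" "\<forall>m<L. m \<noteq> k \<longrightarrow> x < fwd (xs ! k) (xs ! m)" by auto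
    show "v \<in> B" unfolding B_def
    proof (intro CollectI conjI ballI impI)
      show "v \<in> set xs" using k l by auto
      fix w assume "w \<in> set xs" "w \<noteq> v"
      then obtain m where "m < L" "w = xs ! m" using l by (auto simp: in_set_conv_nth)
      thus "x < fwd v w" using k \<open>w \<noteq> v\<close> by auto
    qed
  next
    fix v assume "v \<in> B"
    then obtain k where k: "k < L" "v = xs ! k" using l by (auto simp: B_def in_set_conv_nth)
    have "\<forall>m<L. m \<noteq> k \<longrightarrow> x < fwd (xs ! k) (xs ! m)"
    proof (intro allI impI)
      fix m assume "m < L" "m \<noteq> k"
      hence "xs ! m \<noteq> xs ! k" using d k l by (simp add: nth_eq_iff_index_eq)
      thus "x < fwd (xs ! k) (xs ! m)" using \<open>v \<in> B\<close> k \<open>m < L\<close> l by (auto simp: B_def)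
    qed
    thus "v \<in> nth xs ` {k. k < L \<and> (\<forall>m<L. m \<noteq> k \<longrightarrow> x < fwd (xs ! k) (xs ! m))}"
      using k by auto
  qed
  also have "B = th ` {i. i < L \<and> (\<forall>j<L. j \<noteq> i \<longrightarrow> x < fwd (th i) (th j))}"
  proof (intro equalityI subsetI)
    fix v assume "v \<in> B"
    then obtain i where i: "i < L" "v = th i" using sx by (auto simp: B_def)
    have "\<forall>j<L. j \<noteq> i \<longrightarrow> x < fwd (th i) (th j)"
    proof (intro allI impI)
      fix j assume "j < L" "j \<noteq> i"
      hence "th j \<noteq> th i" using inj i by (auto dest: inj_onD)
      thus "x < fwd (th i) (th j)" using \<open>v \<in> B\<close> i \<open>j < L\<close> sx by (auto simp: B_def)
    qed
    thus "v \<in> th ` {i. i < L \<and> (\<forall>j<L. j \<noteq> i \<longrightarrow> x < fwd (th i) (th j))}" using i by auto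
  next
    fix v assume "v \<in> th ` {i. i < L \<and> (\<forall>j<L. j \<noteq> i \<longrightarrow> x < fwd (th i) (th j))}"
    then obtain i where i: "i < L" "v = th i" "\<forall>j<L. j \<noteq> i \<longrightarrow> x < fwd (th i) (th j)" by auto
    show "v \<in> B" unfolding B_def
    proof (intro CollectI conjI ballI impI)
      show "v \<in> set xs" using i sx by auto
      fix w assume "w \<in> set xs" "w \<noteq> v"
      then obtain j where "j < L" "w = th j" using sx by auto
      thus "x < fwd v w" using i \<open>w \<noteq> v\<close> by auto
    qed
  qed
  also have "card \<dots> = card {i. i < L \<and> (\<forall>j<L. j \<noteq> i \<longrightarrow> x < fwd (th i) (th j))}"
    by (rule card_image) (rule inj_on_subset[OF inj], auto)
  finally show ?thesis .
qed


definition U :: "real measure" where "U = uniform_measure lborel {0..<2*pi}"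

lemma sets_U[measurable_cong, simp]: "sets U = sets borel"
  by (simp add: U_def)

lemma space_U[simp]: "space U = UNIV"
  by (simp add: U_def)

lemma prob_space_U: "prob_space U"
  unfolding U_def by (rule prob_space_uniform_measure) auto

lemma nn_integral_U:
  assumes [measurable]: "f \<in> borel_measurable borel"
  shows "(\<integral>\<^sup>+t. f t \<partial>U) = (\<integral>\<^sup>+t. f t * indicator {0..<2*pi} t \<partial>lborel) / ennreal (2*pi)"
  unfolding U_def by (subst nn_integral_uniform_measure) auto

lemma emeasure_U:
  assumes [measurable]: "A \<in> sets borel"
  shows "emeasure U A = emeasure lborel ({0..<2*pi} \<inter> A) / ennreal (2*pi)"
  unfolding U_def by (subst emeasure_uniform_measure) auto

lemma poly_piece_integral:
  fixes lo hi c :: real and n :: nat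
  assumes "lo \<le> c" "n = 0 \<Longrightarrow> c = lo"
    and S1: "{t. lo < t \<and> t < hi} \<subseteq> S" and S2: "S \<subseteq> {t. lo \<le> t \<and> t \<le> hi}"
    and S3[measurable]: "S \<in> sets borel"
  shows "(\<integral>\<^sup>+ t. indicator S t * ennreal ((max 0 (t - c)) ^ n) \<partial>lborel)
       = ennreal ((max 0 (hi - c)) ^ Suc n / Suc n)"
proof -
  have "(\<integral>\<^sup>+ t. indicator S t * ennreal ((max 0 (t - c)) ^ n) \<partial>lborel)
      = (\<integral>\<^sup>+ t. ennreal ((t - c) ^ n) * indicator {c..hi} t \<partial>lborel)"
  proof (rule nn_integral_cong_AE)
    have "AE t in lborel. t \<noteq> lo" "AE t in lborel. t \<noteq> hi" by (rule AE_lborel_singleton)+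
    thus "AE t in lborel. indicator S t * ennreal ((max 0 (t - c)) ^ n)
        = ennreal ((t - c) ^ n) * indicator {c..hi} t"
    proof eventually_elim
      case (elim t)
      show ?case
      proof (cases "lo < t \<and> t < hi")
        case True
        hence "t \<in> S" using S1 by auto
        show ?thesis
        proof (cases "c \<le> t")
          case True
          thus ?thesis using \<open>t \<in> S\<close> \<open>lo < t \<and> t < hi\<close> by (simp add: indicator_def max_def)
        next
          case False
          hence "n \<noteq> 0" using assms(2) \<open>lo < t \<and> t < hi\<close> by auto
          thus ?thesis using False \<open>t \<in> S\<close> by (simp add: indicator_def max_def)
        qed
      next
        case False
        hence "t \<notin> S" using S2 elim by auto
        moreover have "t \<notin> {c..hi}" using False elim assms(1) by auto
        ultimately show ?thesis by simp
      qed
    qed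
  qed
  also have "\<dots> = ennreal ((max 0 (hi - c)) ^ Suc n / Suc n)"
  proof (cases "c \<le> hi")
    case True
    have "(\<integral>\<^sup>+ t. ennreal ((t - c) ^ n) * indicator {c..hi} t \<partial>lborel)
        = ennreal ((hi - c) ^ Suc n / Suc n - (c - c) ^ Suc n / Suc n)"
    proof (rule nn_integral_FTC_Icc[where F="\<lambda>t. (t - c) ^ Suc n / Suc n"])
      fix t :: real
      have "((\<lambda>t. (t - c) ^ Suc n) has_real_derivative real (Suc n) * (t - c) ^ n) (at t)"
        by (rule derivative_eq_intros refl | simp)+
      from DERIV_cdivide[OF this, of "real (Suc n)"]
      show "((\<lambda>t. (t - c) ^ Suc n / Suc n) has_real_derivative (t - c) ^ n) (at t)"
        by simp
    qed (auto simp: True)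
    thus ?thesis using True by (simp add: max_def)
  next
    case False
    hence "{c..hi} = {}" by auto
    thus ?thesis using False by (simp add: max_def)
  qed
  finally show ?thesis .
qed


definition Lin :: "real \<Rightarrow> 'i set \<Rightarrow> real \<Rightarrow> real \<Rightarrow> ('i \<Rightarrow> real) set" where
  "Lin x A lo hi = {y \<in> space (PiM A (\<lambda>_. U)). \<forall>i\<in>A. 0 \<le> y i \<and> y i < 2*pi \<and> lo < y i \<and> y i < hi
       \<and> (\<forall>j\<in>A. j \<noteq> i \<longrightarrow> x < \<bar>y i - y j\<bar>)}"

lemma Lin_sets[measurable]: "finite A \<Longrightarrow> Lin x A lo hi \<in> sets (PiM A (\<lambda>_. U))"
  unfolding Lin_def by measurable

lemma Linb_sets:
  assumes "finite A" "b \<in> A"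
  shows "{y \<in> Lin x A lo hi. \<forall>i\<in>A. i \<noteq> b \<longrightarrow> y i < y b} \<in> sets (PiM A (\<lambda>_. U))"
proof -
  have "{y \<in> Lin x A lo hi. \<forall>i\<in>A. i \<noteq> b \<longrightarrow> y i < y b} =
     Lin x A lo hi \<inter> {y \<in> space (PiM A (\<lambda>_. U)). \<forall>i\<in>A. i \<noteq> b \<longrightarrow> y i < y b}"
    by (auto simp: Lin_def)
  also have "\<dots> \<in> sets (PiM A (\<lambda>_. U))"
    using assms by (intro sets.Int Lin_sets) measurable
  finally show ?thesis .
qed

definition Linb :: "real \<Rightarrow> 'i set \<Rightarrow> real \<Rightarrow> real \<Rightarrow> 'i \<Rightarrow> ('i \<Rightarrow> real) set" where
  "Linb x A lo hi b = {y \<in> Lin x A lo hi. \<forall>i\<in>A. i \<noteq> b \<longrightarrow> y i < y b}"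

lemma Linb_sets'[measurable]: "finite A \<Longrightarrow> b \<in> A \<Longrightarrow> Linb x A lo hi b \<in> sets (PiM A (\<lambda>_. U))"
  unfolding Linb_def by (rule Linb_sets)

lemma Lin_split:
  assumes "finite A" "0 < x" "A \<noteq> {}"
  shows "indicator (Lin x A lo hi) y = (\<Sum>b\<in>A. indicator (Linb x A lo hi b) y :: ennreal)"
proof (cases "y \<in> Lin x A lo hi")
  case False
  thus ?thesis by (auto simp: Linb_def indicator_def)
next
  case True
  show ?thesis
  proof (cases "A = {}")
    case True
    thus ?thesis using assms(3) by simp
  next
    case False
    have "Max (y ` A) \<in> y ` A" using assms False by (intro Max_in) auto
    then obtain b0 where b0: "b0 \<in> A" "y b0 = Max (y ` A)" by (metis imageE)
    have ge: "y i \<le> y b0" if "i \<in> A" for i using b0 that assms by auto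
    have ne: "y i \<noteq> y j" if "i \<in> A" "j \<in> A" "i \<noteq> j" for i j
    proof -
      have "\<forall>i\<in>A. \<forall>j\<in>A. j \<noteq> i \<longrightarrow> x < \<bar>y i - y j\<bar>" using True by (simp add: Lin_def)
      hence "x < \<bar>y i - y j\<bar>" using that by auto
      thus ?thesis using assms(2) by auto
    qed
    have iff: "y \<in> Linb x A lo hi b \<longleftrightarrow> b = b0" if "b \<in> A" for b
    proof
      assume "y \<in> Linb x A lo hi b"
      hence "\<forall>i\<in>A. i \<noteq> b \<longrightarrow> y i < y b" by (auto simp: Linb_def)
      thus "b = b0" using ge[OF that] b0(1) by (metis not_less)
    next
      assume "b = b0"
      thus "y \<in> Linb x A lo hi b" using True ge ne b0(1)
        by (auto simp: Linb_def intro: order.not_eq_order_implies_strict)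
    qed
    have "(\<Sum>b\<in>A. indicator (Linb x A lo hi b) y :: ennreal) = (\<Sum>b\<in>A. if b = b0 then 1 else 0)"
      by (intro sum.cong refl) (simp add: indicator_def iff)
    also have "\<dots> = 1" using b0 assms by simp
    finally show ?thesis using True by simp
  qed
qed

lemma Linb_upd:
  assumes "b \<notin> A'" "y \<in> space (PiM A' (\<lambda>_. U))" "0 < x"
  shows "y(b := t) \<in> Linb x (insert b A') lo hi b \<longleftrightarrow>
     (t \<in> {t. 0 \<le> t \<and> t < 2*pi \<and> lo < t \<and> t < hi} \<and> y \<in> Lin x A' lo (t - x))"
proof -
  have sp: "y(b := t) \<in> space (PiM (insert b A') (\<lambda>_. U))"
    using assms(2) by (auto simp: space_PiM PiE_def extensional_def)
  have yb: "\<And>i. i \<in> A' \<Longrightarrow> (y(b := t)) i = y i" using assms(1) by auto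
  show ?thesis
  proof
    assume h: "y(b := t) \<in> Linb x (insert b A') lo hi b"
    hence h1: "\<forall>i\<in>insert b A'. 0 \<le> (y(b:=t)) i \<and> (y(b:=t)) i < 2*pi \<and> lo < (y(b:=t)) i
        \<and> (y(b:=t)) i < hi \<and> (\<forall>j\<in>insert b A'. j \<noteq> i \<longrightarrow> x < \<bar>(y(b:=t)) i - (y(b:=t)) j\<bar>)"
      and h2: "\<forall>i\<in>insert b A'. i \<noteq> b \<longrightarrow> (y(b:=t)) i < (y(b:=t)) b"
      by (auto simp: Linb_def Lin_def)
    have t: "0 \<le> t \<and> t < 2*pi \<and> lo < t \<and> t < hi" using h1 by auto
    have "\<forall>i\<in>A'. 0 \<le> y i \<and> y i < 2*pi \<and> lo < y i \<and> y i < t - x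
       \<and> (\<forall>j\<in>A'. j \<noteq> i \<longrightarrow> x < \<bar>y i - y j\<bar>)"
    proof
      fix i assume i: "i \<in> A'"
      hence ib: "i \<noteq> b" using assms(1) by auto
      have a: "0 \<le> y i \<and> y i < 2*pi \<and> lo < y i" using h1 i yb[OF i] by auto
      have "y i < t" using h2 i ib yb[OF i] by auto
      moreover have "x < \<bar>y i - t\<bar>" using h1 i ib yb[OF i] by (metis fun_upd_same insertI1 insertI2)
      ultimately have "y i < t - x" by auto
      moreover have "\<forall>j\<in>A'. j \<noteq> i \<longrightarrow> x < \<bar>y i - y j\<bar>"
      proof (intro ballI impI)
        fix j assume "j \<in> A'" "j \<noteq> i"
        thus "x < \<bar>y i - y j\<bar>" using h1 i yb by (metis insertI2)
      qed
      ultimately show "0 \<le> y i \<and> y i < 2*pi \<and> lo < y i \<and> y i < t - x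
       \<and> (\<forall>j\<in>A'. j \<noteq> i \<longrightarrow> x < \<bar>y i - y j\<bar>)" using a by auto
    qed
    thus "t \<in> {t. 0 \<le> t \<and> t < 2*pi \<and> lo < t \<and> t < hi} \<and> y \<in> Lin x A' lo (t - x)"
      using t assms(2) by (auto simp: Lin_def)
  next
    assume h: "t \<in> {t. 0 \<le> t \<and> t < 2*pi \<and> lo < t \<and> t < hi} \<and> y \<in> Lin x A' lo (t - x)"
    hence t: "0 \<le> t" "t < 2*pi" "lo < t" "t < hi" by auto
    have h2: "\<forall>i\<in>A'. 0 \<le> y i \<and> y i < 2*pi \<and> lo < y i \<and> y i < t - x
       \<and> (\<forall>j\<in>A'. j \<noteq> i \<longrightarrow> x < \<bar>y i - y j\<bar>)" using h by (auto simp: Lin_def)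
    have "\<forall>i\<in>insert b A'. 0 \<le> (y(b:=t)) i \<and> (y(b:=t)) i < 2*pi \<and> lo < (y(b:=t)) i
        \<and> (y(b:=t)) i < hi \<and> (\<forall>j\<in>insert b A'. j \<noteq> i \<longrightarrow> x < \<bar>(y(b:=t)) i - (y(b:=t)) j\<bar>)"
    proof
      fix i assume i: "i \<in> insert b A'"
      show "0 \<le> (y(b:=t)) i \<and> (y(b:=t)) i < 2*pi \<and> lo < (y(b:=t)) i
        \<and> (y(b:=t)) i < hi \<and> (\<forall>j\<in>insert b A'. j \<noteq> i \<longrightarrow> x < \<bar>(y(b:=t)) i - (y(b:=t)) j\<bar>)"
      proof (cases "i = b")
        case True
        have "\<forall>j\<in>insert b A'. j \<noteq> i \<longrightarrow> x < \<bar>(y(b:=t)) i - (y(b:=t)) j\<bar>"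
        proof (intro ballI impI)
          fix j assume "j \<in> insert b A'" "j \<noteq> i"
          hence j: "j \<in> A'" "j \<noteq> b" using True by auto
          thus "x < \<bar>(y(b:=t)) i - (y(b:=t)) j\<bar>" using h2 True by auto
        qed
        thus ?thesis using True t by simp
      next
        case False
        hence i': "i \<in> A'" using i by auto
        have "\<forall>j\<in>insert b A'. j \<noteq> i \<longrightarrow> x < \<bar>(y(b:=t)) i - (y(b:=t)) j\<bar>"
        proof (intro ballI impI)
          fix j assume "j \<in> insert b A'" "j \<noteq> i"
          thus "x < \<bar>(y(b:=t)) i - (y(b:=t)) j\<bar>" using h2 False i' by auto
        qed
        have "y i < t - x" using h2 i' by auto
        thus ?thesis using False h2 i' t assms(3) by auto
      qed
    qed
    moreover have "\<forall>i\<in>insert b A'. i \<noteq> b \<longrightarrow> (y(b:=t)) i < (y(b:=t)) b"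
      using h2 assms(3) by auto
    ultimately show "y(b := t) \<in> Linb x (insert b A') lo hi b"
      using sp by (auto simp: Linb_def Lin_def)
  qed
qed


lemma sigma_finite_U: "sigma_finite_measure U"
  using prob_space_U by (rule prob_space_imp_sigma_finite)

lemma alg_aux: "(k::real) \<noteq> 0 \<Longrightarrow> q \<noteq> 0 \<Longrightarrow> k * (M / k * (1 / q ^ n) / q) = M / q ^ Suc n"
  by (simp add: field_simps)

lemma Lin_emeasure:
  fixes A :: "'i set"
  assumes "finite A" "0 < x"
  shows "emeasure (PiM A (\<lambda>_. U)) (Lin x A lo hi) =
    ennreal ((max 0 (min hi (2*pi) - max lo 0 - (real (card A) - 1) * x)) ^ card A / (2*pi) ^ card A)"
  using assms
proof (induction "card A" arbitrary: A lo hi)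
  case 0
  hence "A = {}" by simp
  thus ?case by (simp add: Lin_def space_PiM_empty)
next
  case (Suc n)
  interpret product_sigma_finite "\<lambda>_::'i. U"
    unfolding product_sigma_finite_def using sigma_finite_U by simp
  have finA: "finite A" and xpos: "0 < x" and cardA: "Suc n = card A" using Suc.prems Suc.hyps(2) by auto
  note IH = Suc.hyps(1)
  define lo' where "lo' = max lo 0"
  define hi' where "hi' = min hi (2*pi)"
  define c where "c = lo' + real n * x"
  define T where "T = {t::real. 0 \<le> t \<and> t < 2*pi \<and> lo < t \<and> t < hi}"
  have T_meas[measurable]: "T \<in> sets borel" unfolding T_def by measurable
  define F where "F = ennreal ((max 0 (hi' - c)) ^ Suc n / Suc n) * ennreal (1 / (2*pi)^n) / ennreal (2*pi)"
  have Lb: "emeasure (PiM A (\<lambda>_. U)) (Linb x A lo hi b) = F" if b: "b \<in> A" for b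
  proof -
    define A' where "A' = A - {b}"
    have AA: "A = insert b A'" "b \<notin> A'" "finite A'" "card A' = n"
      using b finA cardA by (auto simp: A'_def)
    have eqA: "PiM A (\<lambda>_. U) = PiM (insert b A') (\<lambda>_. U)" using AA(1) by simp
    have mLb: "Linb x A lo hi b \<in> sets (PiM (insert b A') (\<lambda>_. U))"
      using Linb_sets'[OF finA b] unfolding eqA .
    have "emeasure (PiM A (\<lambda>_. U)) (Linb x A lo hi b) =
        (\<integral>\<^sup>+y. indicator (Linb x A lo hi b) y \<partial>PiM (insert b A') (\<lambda>_. U))"
      unfolding eqA using mLb by (rule nn_integral_indicator[symmetric])
    also have "\<dots> = (\<integral>\<^sup>+t. \<integral>\<^sup>+y. indicator (Linb x A lo hi b) (y(b := t)) \<partial>PiM A' (\<lambda>_. U) \<partial>U)"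
      using mLb by (intro product_nn_integral_insert_rev AA(3) AA(2)) simp
    also have "\<dots> = (\<integral>\<^sup>+t. indicator T t * emeasure (PiM A' (\<lambda>_. U)) (Lin x A' lo (t - x)) \<partial>U)"
    proof (intro nn_integral_cong)
      fix t
      have "(\<integral>\<^sup>+y. indicator (Linb x A lo hi b) (y(b := t)) \<partial>PiM A' (\<lambda>_. U)) =
            (\<integral>\<^sup>+y. indicator T t * indicator (Lin x A' lo (t - x)) y \<partial>PiM A' (\<lambda>_. U))"
      proof (intro nn_integral_cong)
        fix y assume y: "y \<in> space (PiM A' (\<lambda>_. U))"
        have "y(b := t) \<in> Linb x A lo hi b \<longleftrightarrow> (t \<in> T \<and> y \<in> Lin x A' lo (t - x))"
          using Linb_upd[OF AA(2) y xpos, of t lo hi] unfolding AA(1)[symmetric] T_def .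
        thus "indicator (Linb x A lo hi b) (y(b := t)) = (indicator T t * indicator (Lin x A' lo (t - x)) y :: ennreal)"
          by (simp add: indicator_def)
      qed
      also have "\<dots> = indicator T t * emeasure (PiM A' (\<lambda>_. U)) (Lin x A' lo (t - x))"
        using AA by (intro nn_integral_cmult_indicator Lin_sets)
      finally show "(\<integral>\<^sup>+y. indicator (Linb x A lo hi b) (y(b := t)) \<partial>PiM A' (\<lambda>_. U)) =
            indicator T t * emeasure (PiM A' (\<lambda>_. U)) (Lin x A' lo (t - x))" .
    qed
    also have "\<dots> = (\<integral>\<^sup>+t. indicator T t * ennreal ((max 0 (t - c)) ^ n) * ennreal (1 / (2*pi)^n) \<partial>U)"
    proof (intro nn_integral_cong)
      fix t
      show "indicator T t * emeasure (PiM A' (\<lambda>_. U)) (Lin x A' lo (t - x)) =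
          indicator T t * ennreal ((max 0 (t - c)) ^ n) * ennreal (1 / (2*pi)^n)"
      proof (cases "t \<in> T")
        case True
        have "min (t - x) (2*pi) - max lo 0 - (real n - 1) * x = t - c"
          using True xpos by (auto simp: T_def c_def lo'_def algebra_simps)
        hence "emeasure (PiM A' (\<lambda>_. U)) (Lin x A' lo (t - x)) =
            ennreal ((max 0 (t - c)) ^ n / (2*pi)^n)"
          using IH[of A' lo "t - x"] AA xpos by simp
        also have "\<dots> = ennreal ((max 0 (t - c)) ^ n) * ennreal (1 / (2*pi)^n)"
          by (subst ennreal_mult[symmetric]) auto
        finally show ?thesis using True by (simp add: mult.assoc)
      qed simp
    qed
    also have "\<dots> = (\<integral>\<^sup>+t. indicator T t * ennreal ((max 0 (t - c)) ^ n) * ennreal (1 / (2*pi)^n)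
                 * indicator {0..<2*pi} t \<partial>lborel) / ennreal (2*pi)"
      by (rule nn_integral_U) measurable
    also have "(\<integral>\<^sup>+t. indicator T t * ennreal ((max 0 (t - c)) ^ n) * ennreal (1 / (2*pi)^n)
                 * indicator {0..<2*pi} t \<partial>lborel) =
        (\<integral>\<^sup>+t. indicator T t * ennreal ((max 0 (t - c)) ^ n) \<partial>lborel) * ennreal (1 / (2*pi)^n)"
    proof -
      have "(\<integral>\<^sup>+t. indicator T t * ennreal ((max 0 (t - c)) ^ n) * ennreal (1 / (2*pi)^n)
                 * indicator {0..<2*pi} t \<partial>lborel) =
          (\<integral>\<^sup>+t. indicator T t * ennreal ((max 0 (t - c)) ^ n) * ennreal (1 / (2*pi)^n) \<partial>lborel)"
        by (intro nn_integral_cong) (auto simp: T_def indicator_def)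
      also have "\<dots> = (\<integral>\<^sup>+t. indicator T t * ennreal ((max 0 (t - c)) ^ n) \<partial>lborel) * ennreal (1 / (2*pi)^n)"
        by (rule nn_integral_multc) measurable
      finally show ?thesis .
    qed
    also have "(\<integral>\<^sup>+t. indicator T t * ennreal ((max 0 (t - c)) ^ n) \<partial>lborel) =
        ennreal ((max 0 (hi' - c)) ^ Suc n / Suc n)"
      by (rule poly_piece_integral) (use xpos in \<open>auto simp: T_def c_def lo'_def hi'_def\<close>)
    finally show ?thesis by (simp add: F_def)
  qed
  have "emeasure (PiM A (\<lambda>_. U)) (Lin x A lo hi) = (\<integral>\<^sup>+y. indicator (Lin x A lo hi) y \<partial>PiM A (\<lambda>_. U))"
    using finA by (simp add: Lin_sets)
  also have "\<dots> = (\<integral>\<^sup>+y. (\<Sum>b\<in>A. indicator (Linb x A lo hi b) y) \<partial>PiM A (\<lambda>_. U))"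
    using finA xpos cardA by (intro nn_integral_cong Lin_split) auto
  also have "\<dots> = (\<Sum>b\<in>A. emeasure (PiM A (\<lambda>_. U)) (Linb x A lo hi b))"
    using finA by (subst nn_integral_sum) (auto simp: Linb_sets')
  also have "\<dots> = (\<Sum>b\<in>A. F)" by (intro sum.cong refl Lb)
  also have "\<dots> = of_nat (Suc n) * F" using cardA by simp
  also have "\<dots> = ennreal ((max 0 (min hi (2*pi) - max lo 0 - (real (card A) - 1) * x)) ^ card A / (2*pi) ^ card A)"
  proof -
    have e: "max 0 (hi' - c) = max 0 (min hi (2*pi) - max lo 0 - (real (card A) - 1) * x)"
      using cardA[symmetric] by (simp add: hi'_def c_def lo'_def algebra_simps)
    define M where "M = (max 0 (hi' - c)) ^ Suc n"
    have M0: "M \<ge> 0" by (simp add: M_def)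
    have 1: "ennreal (M / Suc n) * ennreal (1/(2*pi)^n) = ennreal (M / Suc n * (1/(2*pi)^n))"
      by (rule ennreal_mult[symmetric]) (use M0 in auto)
    have 2: "ennreal (M / Suc n * (1/(2*pi)^n)) / ennreal (2*pi) = ennreal (M / Suc n * (1/(2*pi)^n) / (2*pi))"
      by (rule divide_ennreal) (use M0 in auto)
    have 3: "(of_nat (Suc n) :: ennreal) * ennreal r = ennreal (real (Suc n) * r)" for r
      by (subst ennreal_mult') (auto simp: ennreal_of_nat_eq_real_of_nat)
    have "of_nat (Suc n) * F = ennreal (real (Suc n) * ((max 0 (hi' - c)) ^ Suc n / Suc n * (1 / (2*pi)^n) / (2*pi)))"
      unfolding F_def M_def[symmetric] 1 2 3 ..
    also have "real (Suc n) * ((max 0 (hi' - c)) ^ Suc n / Suc n * (1 / (2*pi)^n) / (2*pi))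
        = (max 0 (hi' - c)) ^ Suc n / (2*pi) ^ Suc n"
      using alg_aux[of "real (Suc n)" "2*pi" "(max 0 (hi' - c)) ^ Suc n" n] by simp
    finally show ?thesis using e cardA[symmetric] by simp
  qed
  finally show ?case .
qed


lemma fwd_self[simp]: "fwd u u = 0" by (simp add: fwd_def)

lemma fwd_pair_imp: "x < fwd u v \<Longrightarrow> x < fwd v u \<Longrightarrow> x < \<bar>u - v\<bar>"
  by (auto simp: fwd_def split: if_splits)

lemma fwd_pair: "0 < x \<Longrightarrow> \<bar>u - v\<bar> < 2*pi - 2*x \<Longrightarrow> x < \<bar>u - v\<bar> \<Longrightarrow> x < fwd u v \<and> x < fwd v u"
  by (auto simp: fwd_def split: if_splits)

definition Ev :: "real \<Rightarrow> 'i set \<Rightarrow> 'i set \<Rightarrow> ('i \<Rightarrow> real) set" where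
  "Ev x I K = {y \<in> space (PiM K (\<lambda>_. U)). (\<forall>k\<in>K. 0 \<le> y k \<and> y k < 2*pi)
      \<and> (\<forall>i\<in>I. \<forall>j\<in>K. j \<noteq> i \<longrightarrow> x < fwd (y i) (y j))}"

lemma fwd_meas[measurable (raw)]:
  assumes [measurable]: "f \<in> borel_measurable M" "g \<in> borel_measurable M"
  shows "(\<lambda>w. fwd (f w) (g w)) \<in> borel_measurable M"
  unfolding fwd_def by measurable

lemma Ev_sets[measurable]: "finite K \<Longrightarrow> I \<subseteq> K \<Longrightarrow> Ev x I K \<in> sets (PiM K (\<lambda>_. U))"
proof -
  assume fK: "finite K" and IK: "I \<subseteq> K"
  hence fI: "finite I" by (rule finite_subset[rotated])
  have "Ev x I K = {y \<in> space (PiM K (\<lambda>_. U)). (\<forall>k\<in>K. 0 \<le> y k \<and> y k < 2*pi)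
      \<and> (\<forall>i\<in>K. \<forall>j\<in>K. i \<in> I \<longrightarrow> j \<noteq> i \<longrightarrow> x < fwd (y i) (y j))}"
    using IK by (auto simp: Ev_def)
  also have "\<dots> \<in> sets (PiM K (\<lambda>_. U))" using fK by measurable
  finally show ?thesis .
qed


definition Evb :: "real \<Rightarrow> 'i set \<Rightarrow> 'i \<Rightarrow> ('i \<Rightarrow> real) set" where
  "Evb x I b = {y \<in> Ev x I I. \<forall>i\<in>I. i \<noteq> b \<longrightarrow> y i < y b}"

lemma Evb_sets[measurable]:
  assumes "finite I" "b \<in> I"
  shows "Evb x I b \<in> sets (PiM I (\<lambda>_. U))"
proof -
  have "Evb x I b = Ev x I I \<inter> {y \<in> space (PiM I (\<lambda>_. U)). \<forall>i\<in>I. i \<noteq> b \<longrightarrow> y i < y b}"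
    by (auto simp: Evb_def Ev_def)
  also have "\<dots> \<in> sets (PiM I (\<lambda>_. U))"
    using assms by (intro sets.Int Ev_sets) (auto, measurable)
  finally show ?thesis .
qed

lemma Ev_split:
  assumes "finite I" "0 < x" "I \<noteq> {}"
  shows "indicator (Ev x I I) y = (\<Sum>b\<in>I. indicator (Evb x I b) y :: ennreal)"
proof (cases "y \<in> Ev x I I")
  case False
  thus ?thesis by (auto simp: Evb_def indicator_def)
next
  case True
  have "Max (y ` I) \<in> y ` I" using assms by (intro Max_in) auto
  then obtain b0 where b0: "b0 \<in> I" "y b0 = Max (y ` I)" by (metis imageE)
  have ge: "y i \<le> y b0" if "i \<in> I" for i using b0 that assms by auto
  have ne: "y i \<noteq> y j" if "i \<in> I" "j \<in> I" "i \<noteq> j" for i j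
  proof -
    have "\<forall>i\<in>I. \<forall>j\<in>I. j \<noteq> i \<longrightarrow> x < fwd (y i) (y j)" using True by (simp add: Ev_def)
    hence "x < fwd (y i) (y j)" using that by auto
    thus ?thesis using assms(2) by auto
  qed
  have iff: "y \<in> Evb x I b \<longleftrightarrow> b = b0" if "b \<in> I" for b
  proof
    assume "y \<in> Evb x I b"
    hence "\<forall>i\<in>I. i \<noteq> b \<longrightarrow> y i < y b" by (auto simp: Evb_def)
    thus "b = b0" using ge[OF that] b0(1) by (metis not_less)
  next
    assume "b = b0"
    thus "y \<in> Evb x I b" using True ge ne b0(1)
      by (auto simp: Evb_def intro: order.not_eq_order_implies_strict)
  qed
  have "(\<Sum>b\<in>I. indicator (Evb x I b) y :: ennreal) = (\<Sum>b\<in>I. if b = b0 then 1 else 0)"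
    by (intro sum.cong refl) (simp add: indicator_def iff)
  also have "\<dots> = 1" using b0 assms by simp
  finally show ?thesis using True by simp
qed

lemma Evb_upd:
  assumes "b \<notin> A'" "y \<in> space (PiM A' (\<lambda>_. U))" "0 < x"
  shows "y(b := t) \<in> Evb x (insert b A') b \<longleftrightarrow>
     (t \<in> {0..<2*pi} \<and> y \<in> Lin x A' (t + x - 2*pi) (t - x))"
proof -
  let ?z = "y(b := t)"
  have sp: "?z \<in> space (PiM (insert b A') (\<lambda>_. U))"
    using assms(2) by (auto simp: space_PiM PiE_def extensional_def)
  have yb: "\<And>i. i \<in> A' \<Longrightarrow> ?z i = y i" using assms(1) by auto
  show ?thesis
  proof
    assume h: "?z \<in> Evb x (insert b A') b"
    hence h1: "\<forall>k\<in>insert b A'. 0 \<le> ?z k \<and> ?z k < 2*pi"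
      and h2: "\<forall>i\<in>insert b A'. \<forall>j\<in>insert b A'. j \<noteq> i \<longrightarrow> x < fwd (?z i) (?z j)"
      and h3: "\<forall>i\<in>insert b A'. i \<noteq> b \<longrightarrow> ?z i < ?z b"
      by (auto simp: Evb_def Ev_def)
    have t: "0 \<le> t \<and> t < 2*pi" using h1 by auto
    have "\<forall>i\<in>A'. 0 \<le> y i \<and> y i < 2*pi \<and> t + x - 2*pi < y i \<and> y i < t - x
       \<and> (\<forall>j\<in>A'. j \<noteq> i \<longrightarrow> x < \<bar>y i - y j\<bar>)"
    proof
      fix i assume i: "i \<in> A'"
      hence ib: "i \<noteq> b" using assms(1) by auto
      have a: "0 \<le> y i \<and> y i < 2*pi" using h1 i yb[OF i] by auto
      have lt: "y i < t" using h3 i ib yb[OF i] by auto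
      have f1: "x < fwd (y i) t" using h2 i ib yb[OF i] by (metis fun_upd_same insertI1 insertI2)
      have f2: "x < fwd t (y i)" using h2 i ib yb[OF i] by (metis fun_upd_same insertI1 insertI2)
      have b1: "y i < t - x" using f1 lt by (simp add: fwd_def)
      have b2: "t + x - 2*pi < y i" using f2 lt by (simp add: fwd_def split: if_splits)
      have "\<forall>j\<in>A'. j \<noteq> i \<longrightarrow> x < \<bar>y i - y j\<bar>"
      proof (intro ballI impI)
        fix j assume j: "j \<in> A'" "j \<noteq> i"
        have "x < fwd (y i) (y j)" "x < fwd (y j) (y i)" using h2 i j yb by (metis insertI2)+
        thus "x < \<bar>y i - y j\<bar>" by (rule fwd_pair_imp)
      qed
      thus "0 \<le> y i \<and> y i < 2*pi \<and> t + x - 2*pi < y i \<and> y i < t - x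
       \<and> (\<forall>j\<in>A'. j \<noteq> i \<longrightarrow> x < \<bar>y i - y j\<bar>)" using a b1 b2 by auto
    qed
    thus "t \<in> {0..<2*pi} \<and> y \<in> Lin x A' (t + x - 2*pi) (t - x)"
      using t assms(2) by (auto simp: Lin_def)
  next
    assume h: "t \<in> {0..<2*pi} \<and> y \<in> Lin x A' (t + x - 2*pi) (t - x)"
    hence t: "0 \<le> t" "t < 2*pi" by auto
    have L: "\<forall>i\<in>A'. 0 \<le> y i \<and> y i < 2*pi \<and> t + x - 2*pi < y i \<and> y i < t - x
       \<and> (\<forall>j\<in>A'. j \<noteq> i \<longrightarrow> x < \<bar>y i - y j\<bar>)" using h by (auto simp: Lin_def)
    have c1: "\<forall>k\<in>insert b A'. 0 \<le> ?z k \<and> ?z k < 2*pi" using L t yb by auto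
    have c2: "\<forall>i\<in>insert b A'. \<forall>j\<in>insert b A'. j \<noteq> i \<longrightarrow> x < fwd (?z i) (?z j)"
    proof (intro ballI impI)
      fix i j assume i: "i \<in> insert b A'" and j: "j \<in> insert b A'" and ji: "j \<noteq> i"
      show "x < fwd (?z i) (?z j)"
      proof (cases "i = b")
        case True
        hence j': "j \<in> A'" "j \<noteq> b" using j ji by auto
        have "t + x - 2*pi < y j" "y j < t - x" using L j' by auto
        thus ?thesis using True j' by (simp add: fwd_def)
      next
        case False
        hence i': "i \<in> A'" using i by auto
        have ib: "t + x - 2*pi < y i" "y i < t - x" using L i' by auto
        show ?thesis
        proof (cases "j = b")
          case True
          thus ?thesis using False ib assms(3) by (simp add: fwd_def)
        next
          case False
          hence j': "j \<in> A'" using j by auto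
          have jb: "t + x - 2*pi < y j" "y j < t - x" using L j' by auto
          have "x < \<bar>y i - y j\<bar>" using L i' j' ji by auto
          moreover have "\<bar>y i - y j\<bar> < 2*pi - 2*x" using ib jb by auto
          ultimately have "x < fwd (y i) (y j) \<and> x < fwd (y j) (y i)"
            using fwd_pair assms(3) by blast
          thus ?thesis using yb i' j' by simp
        qed
      qed
    qed
    have c3: "\<forall>i\<in>insert b A'. i \<noteq> b \<longrightarrow> ?z i < ?z b"
      using L assms(3) by auto
    show "?z \<in> Evb x (insert b A') b"
      using sp c1 c2 c3 by (simp add: Evb_def Ev_def)
  qed
qed

lemma alg2: "(k::real) \<noteq> 0 \<Longrightarrow> q \<noteq> 0 \<Longrightarrow>
  k * ((D ^ Suc m / k + x * D ^ m) * (1 / q ^ m) / q) = D ^ m * (D + k * x) / q ^ Suc m"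
  by (simp add: field_simps power_Suc)

lemma Q_alg:
  fixes x :: real and m :: nat
  assumes "0 < x" "x < 2*pi"
  defines "D \<equiv> max 0 (2*pi - real (Suc m) * x)"
  shows "real (Suc m) * ((D ^ Suc m / Suc m + x * D ^ m) * (1/(2*pi)^m) / (2*pi))
       = (max 0 (1 - real (Suc m) * x / (2*pi))) ^ m"
proof (cases "0 \<le> 2*pi - real (Suc m) * x")
  case True
  hence D: "D = 2*pi - real (Suc m) * x" by (simp add: D_def)
  have "real (Suc m) * ((D ^ Suc m / Suc m + x * D ^ m) * (1/(2*pi)^m) / (2*pi))
      = D ^ m * (D + real (Suc m) * x) / (2*pi) ^ Suc m"
    by (rule alg2) auto
  also have "D + real (Suc m) * x = 2*pi" by (simp add: D)
  also have "D ^ m * (2*pi) / (2*pi) ^ Suc m = (D / (2*pi)) ^ m"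
    by (simp add: power_divide power_Suc field_simps)
  also have "D / (2*pi) = max 0 (1 - real (Suc m) * x / (2*pi))"
    using True by (simp add: D field_simps)
  finally show ?thesis .
next
  case False
  hence D: "D = 0" by (simp add: D_def)
  have "m \<noteq> 0" using False assms by (cases m) auto
  moreover have "max 0 (1 - real (Suc m) * x / (2*pi)) = 0"
    using False by (auto simp: field_simps)
  ultimately show ?thesis by (simp add: D zero_power)
qed

lemma S_split_integral:
  fixes x :: real and m :: nat
  assumes "0 < x" "x < 2*pi"
  defines "D \<equiv> max 0 (2*pi - real (Suc m) * x)"
  shows "(\<integral>\<^sup>+t. indicator {0..<2*pi} t *
       ennreal ((max 0 (t - x - max (t + x - 2*pi) 0 - (real m - 1) * x)) ^ m) \<partial>lborel)
     = ennreal (D ^ Suc m / Suc m + x * D ^ m)"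
proof -
  define S1 where "S1 = {t::real. 0 \<le> t \<and> t \<le> 2*pi - x}"
  define S2 where "S2 = {2*pi - x <..< 2*pi}"
  have [measurable]: "S1 \<in> sets borel" "S2 \<in> sets borel" by (auto simp: S1_def S2_def)
  have "(\<integral>\<^sup>+t. indicator {0..<2*pi} t *
       ennreal ((max 0 (t - x - max (t + x - 2*pi) 0 - (real m - 1) * x)) ^ m) \<partial>lborel)
    = (\<integral>\<^sup>+t. indicator S1 t * ennreal ((max 0 (t - real m * x)) ^ m) + indicator S2 t * ennreal (D ^ m) \<partial>lborel)"
  proof (intro nn_integral_cong)
    fix t :: real
    consider "t \<in> S1" | "t \<in> S2" | "t \<notin> {0..<2*pi}"
      using assms by (force simp: S1_def S2_def)
    thus "indicator {0..<2*pi} t *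
       ennreal ((max 0 (t - x - max (t + x - 2*pi) 0 - (real m - 1) * x)) ^ m)
      = indicator S1 t * ennreal ((max 0 (t - real m * x)) ^ m) + indicator S2 t * ennreal (D ^ m)"
    proof cases
      case 1
      hence "t \<notin> S2" "t \<in> {0..<2*pi}" using assms by (auto simp: S1_def S2_def)
      moreover have e: "t - x - max (t + x - 2*pi) 0 - (real m - 1) * x = t - real m * x"
        using 1 by (auto simp: S1_def algebra_simps)
      ultimately show ?thesis using 1 unfolding e by simp
    next
      case 2
      hence "t \<notin> S1" "t \<in> {0..<2*pi}" using assms by (auto simp: S1_def S2_def)
      moreover have e: "t - x - max (t + x - 2*pi) 0 - (real m - 1) * x = 2*pi - real (Suc m) * x"
        using 2 by (auto simp: S2_def algebra_simps)
      ultimately show ?thesis using 2 unfolding e by (simp add: D_def)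
    next
      case 3
      hence "t \<notin> S1" "t \<notin> S2" using assms by (auto simp: S1_def S2_def)
      thus ?thesis using 3 by simp
    qed
  qed
  also have "\<dots> = (\<integral>\<^sup>+t. indicator S1 t * ennreal ((max 0 (t - real m * x)) ^ m) \<partial>lborel)
       + (\<integral>\<^sup>+t. indicator S2 t * ennreal (D ^ m) \<partial>lborel)"
    by (rule nn_integral_add) auto
  also have "(\<integral>\<^sup>+t. indicator S1 t * ennreal ((max 0 (t - real m * x)) ^ m) \<partial>lborel)
      = ennreal ((max 0 (2*pi - x - real m * x)) ^ Suc m / Suc m)"
    by (rule poly_piece_integral) (use assms in \<open>auto simp: S1_def\<close>)
  also have "(\<integral>\<^sup>+t. indicator S2 t * ennreal (D ^ m) \<partial>lborel) = ennreal (D ^ m) * ennreal x"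
  proof -
    have "(\<integral>\<^sup>+t. indicator S2 t * ennreal (D ^ m) \<partial>lborel) = (\<integral>\<^sup>+t. ennreal (D ^ m) * indicator S2 t \<partial>lborel)"
      by (simp add: mult.commute)
    also have "\<dots> = ennreal (D ^ m) * emeasure lborel S2" by (rule nn_integral_cmult_indicator) simp
    also have "emeasure lborel S2 = ennreal x" using assms by (simp add: S2_def)
    finally show ?thesis .
  qed
  also have "max 0 (2*pi - x - real m * x) = D" by (simp add: D_def algebra_simps)
  also have "ennreal (D ^ Suc m / Suc m) + ennreal (D ^ m) * ennreal x = ennreal (D ^ Suc m / Suc m + x * D ^ m)"
  proof -
    have D0: "D \<ge> 0" by (simp add: D_def)
    have "ennreal (D ^ m) * ennreal x = ennreal (x * D ^ m)"
      using assms D0 by (subst ennreal_mult[symmetric]) (auto simp: mult.commute)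
    moreover have "ennreal (D ^ Suc m / Suc m) + ennreal (x * D ^ m) = ennreal (D ^ Suc m / Suc m + x * D ^ m)"
      using assms D0 by (intro ennreal_plus[symmetric]) auto
    ultimately show ?thesis by simp
  qed
  finally show ?thesis .
qed


lemma Q_emeasure:
  fixes I :: "'i set"
  assumes finI: "finite I" and ne: "I \<noteq> {}" and xpos: "0 < x" and x2: "x < 2*pi"
  shows "emeasure (PiM I (\<lambda>_. U)) (Ev x I I) =
     ennreal ((max 0 (1 - real (card I) * x / (2*pi))) ^ (card I - 1))"
proof -
  interpret product_sigma_finite "\<lambda>_::'i. U"
    unfolding product_sigma_finite_def using sigma_finite_U by simp
  obtain m where cI: "card I = Suc m" using finI ne by (cases "card I") auto
  define D where "D = max 0 (2*pi - real (Suc m) * x)"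
  define G where "G = ennreal (D ^ Suc m / Suc m + x * D ^ m) * ennreal (1/(2*pi)^m) / ennreal (2*pi)"
  have Eb: "emeasure (PiM I (\<lambda>_. U)) (Evb x I b) = G" if b: "b \<in> I" for b
  proof -
    define A' where "A' = I - {b}"
    have AA: "I = insert b A'" "b \<notin> A'" "finite A'" "card A' = m"
      using b finI cI by (auto simp: A'_def)
    have eqA: "PiM I (\<lambda>_. U) = PiM (insert b A') (\<lambda>_. U)" using AA(1) by simp
    have mEb: "Evb x I b \<in> sets (PiM (insert b A') (\<lambda>_. U))"
      using Evb_sets[OF finI b] unfolding eqA .
    have "emeasure (PiM I (\<lambda>_. U)) (Evb x I b) =
        (\<integral>\<^sup>+y. indicator (Evb x I b) y \<partial>PiM (insert b A') (\<lambda>_. U))"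
      unfolding eqA using mEb by (rule nn_integral_indicator[symmetric])
    also have "\<dots> = (\<integral>\<^sup>+t. \<integral>\<^sup>+y. indicator (Evb x I b) (y(b := t)) \<partial>PiM A' (\<lambda>_. U) \<partial>U)"
      using mEb by (intro product_nn_integral_insert_rev AA(3) AA(2)) simp
    also have "\<dots> = (\<integral>\<^sup>+t. indicator {0..<2*pi} t *
          emeasure (PiM A' (\<lambda>_. U)) (Lin x A' (t + x - 2*pi) (t - x)) \<partial>U)"
    proof (intro nn_integral_cong)
      fix t
      have "(\<integral>\<^sup>+y. indicator (Evb x I b) (y(b := t)) \<partial>PiM A' (\<lambda>_. U)) =
            (\<integral>\<^sup>+y. indicator {0..<2*pi} t * indicator (Lin x A' (t + x - 2*pi) (t - x)) y \<partial>PiM A' (\<lambda>_. U))"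
      proof (intro nn_integral_cong)
        fix y assume y: "y \<in> space (PiM A' (\<lambda>_. U))"
        have "y(b := t) \<in> Evb x I b \<longleftrightarrow> (t \<in> {0..<2*pi} \<and> y \<in> Lin x A' (t + x - 2*pi) (t - x))"
          using Evb_upd[OF AA(2) y xpos, of t] unfolding AA(1)[symmetric] .
        thus "indicator (Evb x I b) (y(b := t)) =
           (indicator {0..<2*pi} t * indicator (Lin x A' (t + x - 2*pi) (t - x)) y :: ennreal)"
          by (simp add: indicator_def)
      qed
      also have "\<dots> = indicator {0..<2*pi} t * emeasure (PiM A' (\<lambda>_. U)) (Lin x A' (t + x - 2*pi) (t - x))"
        using AA by (intro nn_integral_cmult_indicator Lin_sets)
      finally show "(\<integral>\<^sup>+y. indicator (Evb x I b) (y(b := t)) \<partial>PiM A' (\<lambda>_. U)) =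
            indicator {0..<2*pi} t * emeasure (PiM A' (\<lambda>_. U)) (Lin x A' (t + x - 2*pi) (t - x))" .
    qed
    also have "\<dots> = (\<integral>\<^sup>+t. indicator {0..<2*pi} t *
          ennreal ((max 0 (t - x - max (t + x - 2*pi) 0 - (real m - 1) * x)) ^ m) * ennreal (1 / (2*pi)^m) \<partial>U)"
    proof (intro nn_integral_cong)
      fix t :: real
      show "indicator {0..<2*pi} t * emeasure (PiM A' (\<lambda>_. U)) (Lin x A' (t + x - 2*pi) (t - x)) =
          indicator {0..<2*pi} t *
          ennreal ((max 0 (t - x - max (t + x - 2*pi) 0 - (real m - 1) * x)) ^ m) * ennreal (1 / (2*pi)^m)"
      proof (cases "t \<in> {0..<2*pi}")
        case True
        have e: "min (t - x) (2*pi) = t - x" using True xpos by auto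
        have "emeasure (PiM A' (\<lambda>_. U)) (Lin x A' (t + x - 2*pi) (t - x)) =
            ennreal ((max 0 (t - x - max (t + x - 2*pi) 0 - (real m - 1) * x)) ^ m / (2*pi)^m)"
          using Lin_emeasure[OF AA(3) xpos, of "t + x - 2*pi" "t - x"] AA(4) e by simp
        also have "\<dots> = ennreal ((max 0 (t - x - max (t + x - 2*pi) 0 - (real m - 1) * x)) ^ m) * ennreal (1 / (2*pi)^m)"
          by (subst ennreal_mult[symmetric]) auto
        finally show ?thesis using True by (simp add: mult.assoc)
      qed simp
    qed
    also have "\<dots> = (\<integral>\<^sup>+t. indicator {0..<2*pi} t *
          ennreal ((max 0 (t - x - max (t + x - 2*pi) 0 - (real m - 1) * x)) ^ m) * ennreal (1 / (2*pi)^m)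
          * indicator {0..<2*pi} t \<partial>lborel) / ennreal (2*pi)"
      by (rule nn_integral_U) measurable
    also have "(\<integral>\<^sup>+t. indicator {0..<2*pi} t *
          ennreal ((max 0 (t - x - max (t + x - 2*pi) 0 - (real m - 1) * x)) ^ m) * ennreal (1 / (2*pi)^m)
          * indicator {0..<2*pi} t \<partial>lborel) =
        (\<integral>\<^sup>+t. indicator {0..<2*pi} t *
          ennreal ((max 0 (t - x - max (t + x - 2*pi) 0 - (real m - 1) * x)) ^ m) \<partial>lborel) * ennreal (1 / (2*pi)^m)"
    proof -
      have "(\<integral>\<^sup>+t. indicator {0..<2*pi} t *
          ennreal ((max 0 (t - x - max (t + x - 2*pi) 0 - (real m - 1) * x)) ^ m) * ennreal (1 / (2*pi)^m)
          * indicator {0..<2*pi} t \<partial>lborel) =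
          (\<integral>\<^sup>+t. indicator {0..<2*pi} t *
          ennreal ((max 0 (t - x - max (t + x - 2*pi) 0 - (real m - 1) * x)) ^ m) * ennreal (1 / (2*pi)^m) \<partial>lborel)"
        by (intro nn_integral_cong) (auto simp: indicator_def)
      also have "\<dots> = (\<integral>\<^sup>+t. indicator {0..<2*pi} t *
          ennreal ((max 0 (t - x - max (t + x - 2*pi) 0 - (real m - 1) * x)) ^ m) \<partial>lborel) * ennreal (1 / (2*pi)^m)"
        by (rule nn_integral_multc) measurable
      finally show ?thesis .
    qed
    also have "(\<integral>\<^sup>+t. indicator {0..<2*pi} t *
          ennreal ((max 0 (t - x - max (t + x - 2*pi) 0 - (real m - 1) * x)) ^ m) \<partial>lborel)
        = ennreal (D ^ Suc m / Suc m + x * D ^ m)"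
      unfolding D_def by (rule S_split_integral[OF xpos x2])
    finally show ?thesis by (simp add: G_def)
  qed
  have "emeasure (PiM I (\<lambda>_. U)) (Ev x I I) = (\<integral>\<^sup>+y. indicator (Ev x I I) y \<partial>PiM I (\<lambda>_. U))"
    using finI by (simp add: Ev_sets)
  also have "\<dots> = (\<integral>\<^sup>+y. (\<Sum>b\<in>I. indicator (Evb x I b) y) \<partial>PiM I (\<lambda>_. U))"
    using finI xpos ne by (intro nn_integral_cong Ev_split) auto
  also have "\<dots> = (\<Sum>b\<in>I. emeasure (PiM I (\<lambda>_. U)) (Evb x I b))"
    using finI by (subst nn_integral_sum) (auto simp: Evb_sets)
  also have "\<dots> = (\<Sum>b\<in>I. G)" by (intro sum.cong refl Eb)
  also have "\<dots> = of_nat (Suc m) * G" using cI by simp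
  also have "\<dots> = ennreal ((max 0 (1 - real (card I) * x / (2*pi))) ^ (card I - 1))"
  proof -
    define M where "M = D ^ Suc m / Suc m + x * D ^ m"
    have M0: "M \<ge> 0" using xpos by (simp add: M_def D_def)
    have 1: "ennreal M * ennreal (1/(2*pi)^m) = ennreal (M * (1/(2*pi)^m))"
      by (rule ennreal_mult[symmetric]) (use M0 in auto)
    have 2: "ennreal (M * (1/(2*pi)^m)) / ennreal (2*pi) = ennreal (M * (1/(2*pi)^m) / (2*pi))"
      by (rule divide_ennreal) (use M0 in auto)
    have 3: "(of_nat (Suc m) :: ennreal) * ennreal r = ennreal (real (Suc m) * r)" for r
      by (subst ennreal_mult') (auto simp: ennreal_of_nat_eq_real_of_nat)
    have "of_nat (Suc m) * G = ennreal (real (Suc m) * (M * (1/(2*pi)^m) / (2*pi)))"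
      unfolding G_def M_def[symmetric] 1 2 3 ..
    also have "real (Suc m) * (M * (1/(2*pi)^m) / (2*pi)) = (max 0 (1 - real (Suc m) * x / (2*pi))) ^ m"
      unfolding M_def D_def by (rule Q_alg[OF xpos x2])
    finally show ?thesis using cI by simp
  qed
  finally show ?thesis .
qed


lemma arc_measure:
  assumes "0 \<le> u" "u < 2*pi" "0 < x" "x < 2*pi"
  shows "emeasure lborel {t. 0 \<le> t \<and> t < 2*pi \<and> fwd u t \<le> x} = ennreal x"
proof (cases "u + x < 2*pi")
  case True
  have "{t. 0 \<le> t \<and> t < 2*pi \<and> fwd u t \<le> x} = {u..u+x}"
    using assms True by (auto simp: fwd_def split: if_splits)
  thus ?thesis using assms by simp
next
  case False
  have e: "{t. 0 \<le> t \<and> t < 2*pi \<and> fwd u t \<le> x} = {u..<2*pi} \<union> {0..u+x-2*pi}"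
    using assms False by (auto simp: fwd_def split: if_splits)
  have "emeasure lborel ({u..<2*pi} \<union> {0..u+x-2*pi}) = emeasure lborel {u..<2*pi} + emeasure lborel {0..u+x-2*pi}"
    using assms by (intro plus_emeasure[symmetric]) auto
  also have "\<dots> = ennreal (2*pi - u) + ennreal (u + x - 2*pi)" using assms False by simp
  also have "\<dots> = ennreal x" using assms False by (subst ennreal_plus[symmetric]) auto
  finally show ?thesis unfolding e .
qed

lemma arc_disjoint:
  assumes "fwd a t \<le> x" "fwd b t \<le> x" "x < fwd a b" "x < fwd b a"
    "0 \<le> a" "a < 2*pi" "0 \<le> b" "b < 2*pi" "0 \<le> t" "t < 2*pi"
  shows False
  using assms by (auto simp: fwd_def split: if_splits)

lemma free_measure:
  fixes I :: "'i set" and y :: "'i \<Rightarrow> real"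
  assumes finI: "finite I" and rng: "\<And>i. i \<in> I \<Longrightarrow> 0 \<le> y i \<and> y i < 2*pi"
    and sep: "\<And>i j. i \<in> I \<Longrightarrow> j \<in> I \<Longrightarrow> i \<noteq> j \<Longrightarrow> x < fwd (y i) (y j)"
    and xpos: "0 < x" and x2: "x < 2*pi"
  shows "emeasure U {t. 0 \<le> t \<and> t < 2*pi \<and> (\<forall>i\<in>I. x < fwd (y i) t)}
     = ennreal (1 - real (card I) * x / (2*pi))"
proof -
  define Arc where "Arc i = {t. 0 \<le> t \<and> t < 2*pi \<and> fwd (y i) t \<le> x}" for i
  have Arc_m[measurable]: "Arc i \<in> sets borel" for i unfolding Arc_def by measurable
  define Fr where "Fr = {t. 0 \<le> t \<and> t < 2*pi \<and> (\<forall>i\<in>I. x < fwd (y i) t)}"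
  have Fr_m[measurable]: "Fr \<in> sets borel" unfolding Fr_def using finI by measurable
  have Fr_eq: "Fr = {0..<2*pi} - (\<Union>i\<in>I. Arc i)"
    by (auto simp: Fr_def Arc_def not_le)
  have disj: "disjoint_family_on Arc I"
    unfolding disjoint_family_on_def
  proof (intro ballI impI)
    fix i j assume ij: "i \<in> I" "j \<in> I" "i \<noteq> j"
    show "Arc i \<inter> Arc j = {}"
    proof (rule ccontr)
      assume "Arc i \<inter> Arc j \<noteq> {}"
      then obtain t where "t \<in> Arc i" "t \<in> Arc j" by auto
      thus False using arc_disjoint[of "y i" t x "y j"] sep[OF ij] sep[of j i] ij rng[of i] rng[of j]
        by (auto simp: Arc_def)
    qed
  qed
  have U_m: "(\<Union>i\<in>I. Arc i) \<in> sets borel" using finI by (intro sets.finite_UN) auto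
  have "emeasure lborel (\<Union>i\<in>I. Arc i) = (\<Sum>i\<in>I. emeasure lborel (Arc i))"
    using finI disj by (intro sum_emeasure[symmetric]) auto
  also have "\<dots> = (\<Sum>i\<in>I. ennreal x)"
    using rng xpos x2 by (intro sum.cong refl) (simp add: Arc_def arc_measure)
  also have "\<dots> = ennreal (real (card I) * x)"
    using xpos by (simp add: ennreal_of_nat_eq_real_of_nat ennreal_mult)
  finally have UA: "emeasure lborel (\<Union>i\<in>I. Arc i) = ennreal (real (card I) * x)" .
  have sub: "(\<Union>i\<in>I. Arc i) \<subseteq> {0..<2*pi}" by (auto simp: Arc_def)
  have "ennreal (real (card I) * x) \<le> ennreal (2*pi)"
    using emeasure_mono[OF sub, of lborel] UA by simp
  hence le: "real (card I) * x \<le> 2*pi" by (simp add: ennreal_le_iff)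
  have "emeasure lborel Fr = emeasure lborel {0..<2*pi} - emeasure lborel (\<Union>i\<in>I. Arc i)"
    unfolding Fr_eq using sub UA U_m by (intro emeasure_Diff) auto
  also have "\<dots> = ennreal (2*pi - real (card I) * x)"
    using UA xpos by (simp add: ennreal_minus)
  finally have EF: "emeasure lborel Fr = ennreal (2*pi - real (card I) * x)" .
  have "emeasure U Fr = emeasure lborel ({0..<2*pi} \<inter> Fr) / ennreal (2*pi)"
    by (rule emeasure_U) simp
  also have "{0..<2*pi} \<inter> Fr = Fr" by (auto simp: Fr_def)
  also have "emeasure lborel Fr / ennreal (2*pi) = ennreal ((2*pi - real (card I) * x) / (2*pi))"
    unfolding EF using le by (intro divide_ennreal) auto
  also have "(2*pi - real (card I) * x) / (2*pi) = 1 - real (card I) * x / (2*pi)"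
    by (simp add: field_simps)
  finally show ?thesis by (simp add: Fr_def)
qed


lemma Ev_upd:
  assumes "b \<notin> K" "I \<subseteq> K" "y \<in> space (PiM K (\<lambda>_. U))"
  shows "y(b := t) \<in> Ev x I (insert b K) \<longleftrightarrow>
     (y \<in> Ev x I K \<and> t \<in> {t. 0 \<le> t \<and> t < 2*pi \<and> (\<forall>i\<in>I. x < fwd (y i) t)})"
proof -
  let ?z = "y(b := t)"
  have sp: "?z \<in> space (PiM (insert b K) (\<lambda>_. U))"
    using assms(3) by (auto simp: space_PiM PiE_def extensional_def)
  have yb: "\<And>i. i \<in> K \<Longrightarrow> ?z i = y i" using assms(1) by auto
  have bI: "b \<notin> I" using assms by auto
  show ?thesis
  proof
    assume h: "?z \<in> Ev x I (insert b K)"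
    hence h1: "\<forall>k\<in>insert b K. 0 \<le> ?z k \<and> ?z k < 2*pi"
      and h2: "\<forall>i\<in>I. \<forall>j\<in>insert b K. j \<noteq> i \<longrightarrow> x < fwd (?z i) (?z j)"
      by (auto simp: Ev_def)
    have "\<forall>k\<in>K. 0 \<le> y k \<and> y k < 2*pi" using h1 yb by auto
    moreover have "\<forall>i\<in>I. \<forall>j\<in>K. j \<noteq> i \<longrightarrow> x < fwd (y i) (y j)"
      using h2 yb assms(2) by (metis insertI2 subsetD)
    moreover have "0 \<le> t \<and> t < 2*pi" using h1 by auto
    moreover have "\<forall>i\<in>I. x < fwd (y i) t"
    proof
      fix i assume i: "i \<in> I"
      hence "i \<noteq> b" using bI by auto
      hence "x < fwd (?z i) (?z b)" using h2 i by auto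
      thus "x < fwd (y i) t" using \<open>i \<noteq> b\<close> by simp
    qed
    ultimately show "y \<in> Ev x I K \<and> t \<in> {t. 0 \<le> t \<and> t < 2*pi \<and> (\<forall>i\<in>I. x < fwd (y i) t)}"
      using assms(3) by (auto simp: Ev_def)
  next
    assume h: "y \<in> Ev x I K \<and> t \<in> {t. 0 \<le> t \<and> t < 2*pi \<and> (\<forall>i\<in>I. x < fwd (y i) t)}"
    have h1: "\<forall>k\<in>K. 0 \<le> y k \<and> y k < 2*pi"
      and h2: "\<forall>i\<in>I. \<forall>j\<in>K. j \<noteq> i \<longrightarrow> x < fwd (y i) (y j)" using h by (auto simp: Ev_def)
    have c1: "\<forall>k\<in>insert b K. 0 \<le> ?z k \<and> ?z k < 2*pi" using h1 h yb by auto
    have c2: "\<forall>i\<in>I. \<forall>j\<in>insert b K. j \<noteq> i \<longrightarrow> x < fwd (?z i) (?z j)"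
    proof (intro ballI impI)
      fix i j assume i: "i \<in> I" and j: "j \<in> insert b K" and ji: "j \<noteq> i"
      have ib: "i \<noteq> b" using i bI by auto
      show "x < fwd (?z i) (?z j)"
      proof (cases "j = b")
        case True
        thus ?thesis using h i ib by simp
      next
        case False
        hence "j \<in> K" using j by auto
        thus ?thesis using h2 i ji ib False by simp
      qed
    qed
    show "?z \<in> Ev x I (insert b K)" using sp c1 c2 by (simp add: Ev_def)
  qed
qed

lemma Ev_emeasure:
  fixes I J :: "'i set"
  assumes finI: "finite I" and ne: "I \<noteq> {}" and finJ: "finite J" and disj: "I \<inter> J = {}"
    and xpos: "0 < x" and x2: "x < 2*pi"
  shows "emeasure (PiM (I \<union> J) (\<lambda>_. U)) (Ev x I (I \<union> J)) =
     ennreal ((max 0 (1 - real (card I) * x / (2*pi))) ^ (card (I \<union> J) - 1))"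
  using finJ disj
proof (induction J rule: finite_induct)
  case empty
  thus ?case using Q_emeasure[OF finI ne xpos x2] by simp
next
  case (insert b J)
  interpret product_sigma_finite "\<lambda>_::'i. U"
    unfolding product_sigma_finite_def using sigma_finite_U by simp
  define K where "K = I \<union> J"
  define r where "r = 1 - real (card I) * x / (2*pi)"
  have bK: "b \<notin> K" using insert by (auto simp: K_def)
  have finK: "finite K" using finI insert by (simp add: K_def)
  have IK: "I \<subseteq> K" by (simp add: K_def)
  have eqK: "I \<union> insert b J = insert b K" by (auto simp: K_def)
  have IH: "emeasure (PiM K (\<lambda>_. U)) (Ev x I K) = ennreal ((max 0 r) ^ (card K - 1))"
    using insert by (simp add: K_def r_def)
  have "K \<noteq> {}" using IK ne by auto
  hence cK: "card K \<ge> 1" using finK by (simp add: Suc_le_eq card_gt_0_iff)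
  have mE: "Ev x I (insert b K) \<in> sets (PiM (insert b K) (\<lambda>_. U))"
    using finK IK by (intro Ev_sets) auto
  define Fr where "Fr y = {t. 0 \<le> t \<and> t < 2*pi \<and> (\<forall>i\<in>I. x < fwd (y i) t)}" for y :: "'i \<Rightarrow> real"
  have Fr_m: "Fr y \<in> sets borel" for y unfolding Fr_def using finI by measurable
  have "emeasure (PiM (insert b K) (\<lambda>_. U)) (Ev x I (insert b K)) =
      (\<integral>\<^sup>+y. indicator (Ev x I (insert b K)) y \<partial>PiM (insert b K) (\<lambda>_. U))"
    using mE by (rule nn_integral_indicator[symmetric])
  also have "\<dots> = (\<integral>\<^sup>+y. \<integral>\<^sup>+t. indicator (Ev x I (insert b K)) (y(b := t)) \<partial>U \<partial>PiM K (\<lambda>_. U))"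
    using mE finK bK by (intro product_nn_integral_insert) auto
  also have "\<dots> = (\<integral>\<^sup>+y. indicator (Ev x I K) y * emeasure U (Fr y) \<partial>PiM K (\<lambda>_. U))"
  proof (intro nn_integral_cong)
    fix y assume y: "y \<in> space (PiM K (\<lambda>_. U))"
    have "(\<integral>\<^sup>+t. indicator (Ev x I (insert b K)) (y(b := t)) \<partial>U) =
        (\<integral>\<^sup>+t. indicator (Ev x I K) y * indicator (Fr y) t \<partial>U)"
      by (intro nn_integral_cong) (simp add: Ev_upd[OF bK IK y] Fr_def indicator_def)
    also have "\<dots> = indicator (Ev x I K) y * emeasure U (Fr y)"
      using Fr_m by (intro nn_integral_cmult_indicator) simp
    finally show "(\<integral>\<^sup>+t. indicator (Ev x I (insert b K)) (y(b := t)) \<partial>U) =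
        indicator (Ev x I K) y * emeasure U (Fr y)" .
  qed
  also have "\<dots> = (\<integral>\<^sup>+y. ennreal r * indicator (Ev x I K) y \<partial>PiM K (\<lambda>_. U))"
  proof (intro nn_integral_cong)
    fix y assume y: "y \<in> space (PiM K (\<lambda>_. U))"
    show "indicator (Ev x I K) y * emeasure U (Fr y) = ennreal r * indicator (Ev x I K) y"
    proof (cases "y \<in> Ev x I K")
      case True
      have "emeasure U (Fr y) = ennreal r" unfolding Fr_def r_def
      proof (rule free_measure[OF finI _ _ xpos x2])
        fix i assume "i \<in> I"
        thus "0 \<le> y i \<and> y i < 2*pi" using True IK by (auto simp: Ev_def)
      next
        fix i j assume "i \<in> I" "j \<in> I" "i \<noteq> j"
        thus "x < fwd (y i) (y j)" using True IK by (auto simp: Ev_def)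
      qed
      thus ?thesis using True by simp
    qed simp
  qed
  also have "\<dots> = ennreal r * emeasure (PiM K (\<lambda>_. U)) (Ev x I K)"
    using finK IK by (intro nn_integral_cmult_indicator Ev_sets) auto
  also have "\<dots> = ennreal ((max 0 r) ^ (card K))"
  proof (cases "r \<ge> 0")
    case True
    have "ennreal r * ennreal ((max 0 r) ^ (card K - 1)) = ennreal (r * r ^ (card K - 1))"
      using True by (simp add: ennreal_mult[symmetric])
    also have "r * r ^ (card K - 1) = r ^ card K" using cK
      by (metis Suc_diff_1 less_le_trans power_Suc zero_less_one)
    finally show ?thesis using True IH by simp
  next
    case False
    hence "ennreal r = 0" by (simp add: ennreal_eq_0_iff)
    moreover have "(max 0 r) ^ card K = 0" using False cK by (simp add: max_def)
    ultimately show ?thesis by simp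
  qed
  also have "card K = card (insert b K) - 1" using bK finK by simp
  finally show ?case unfolding eqK r_def .
qed


definition coef :: "nat \<Rightarrow> real" where
  "coef n = (-1::real) powi (int n - 1) * (real n - 1)"

lemma coef_alt: "coef n = (-1)^n * (1 - real n)"
proof (cases n)
  case 0
  thus ?thesis by (simp add: coef_def)
next
  case (Suc m)
  hence "int n - 1 = int m" by simp
  thus ?thesis using Suc by (simp add: coef_def power_int_of_nat algebra_simps)
qed

lemma coef_binom_sum: "(\<Sum>n\<le>m. real (m choose n) * coef n) = (if m \<le> 1 then 1 else 0)"
proof (cases "m \<le> 1")
  case True
  hence "m = 0 \<or> m = 1" by auto
  thus ?thesis by (auto simp: coef_alt)
next
  case False
  have "(\<Sum>n\<le>m. real (m choose n) * coef n) =
      (\<Sum>n\<le>m. (-1)^n * of_nat (m choose n)) - (\<Sum>n\<le>m. (-1)^n * of_nat n * of_nat (m choose n) :: real)"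
    by (simp add: coef_alt sum_subtractf[symmetric] algebra_simps)
  also have "\<dots> = 0"
    using False choose_alternating_sum[of m, where 'a=real] choose_alternating_linear_sum[of m, where 'a=real] by simp
  finally show ?thesis using False by simp
qed

lemma sum_pow_card:
  assumes "finite S"
  shows "(\<Sum>I\<in>Pow S. f (card I)) = (\<Sum>n\<le>card S. real (card S choose n) * (f n :: real))"
proof -
  have "(\<Sum>I\<in>Pow S. f (card I)) = (\<Sum>n\<le>card S. \<Sum>I\<in>{I. I \<in> Pow S \<and> card I = n}. f (card I))"
    using assms by (intro sum.group[symmetric]) (auto intro: card_mono)
  also have "\<dots> = (\<Sum>n\<le>card S. real (card S choose n) * f n)"
  proof (intro sum.cong refl)
    fix n
    have "(\<Sum>I\<in>{I. I \<in> Pow S \<and> card I = n}. f (card I)) = (\<Sum>I\<in>{I. I \<subseteq> S \<and> card I = n}. f n)"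
      by (intro sum.cong) auto
    also have "\<dots> = real (card {I. I \<subseteq> S \<and> card I = n}) * f n" by simp
    also have "card {I. I \<subseteq> S \<and> card I = n} = card S choose n" using assms by (rule n_subsets)
    finally show "(\<Sum>I\<in>{I. I \<in> Pow S \<and> card I = n}. f (card I)) = real (card S choose n) * f n" .
  qed
  finally show ?thesis .
qed

lemma indicator_identity:
  assumes "finite K" "S \<subseteq> K"
  shows "(\<Sum>I\<in>Pow K. coef (card I) * (if I \<subseteq> S then 1 else 0)) = (if card S \<le> 1 then 1 else (0::real))"
proof -
  have fS: "finite S" using assms finite_subset by blast
  have "(\<Sum>I\<in>Pow K. coef (card I) * (if I \<subseteq> S then 1 else 0)) = (\<Sum>I\<in>Pow S. coef (card I))"
  proof -
    have "(\<Sum>I\<in>Pow K. coef (card I) * (if I \<subseteq> S then 1 else 0)) = (\<Sum>I\<in>Pow K. if I \<in> Pow S then coef (card I) else 0)"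
      by (intro sum.cong) auto
    also have "\<dots> = (\<Sum>I\<in>Pow K \<inter> Pow S. coef (card I))"
      using assms by (simp add: sum.inter_restrict)
    also have "Pow K \<inter> Pow S = Pow S" using assms by auto
    finally show ?thesis .
  qed
  also have "\<dots> = (\<Sum>n\<le>card S. real (card S choose n) * coef n)" by (rule sum_pow_card[OF fS])
  also have "\<dots> = (if card S \<le> 1 then 1 else 0)" by (rule coef_binom_sum)
  finally show ?thesis .
qed

lemma cdf_sum_eq:
  assumes "L \<ge> 2" "0 < x"
  shows "(\<Sum>n\<le>L. real (L choose n) * coef n * (max 0 (1 - real n * x / (2*pi))) ^ (L - 1)) = cdf_sum L x"
proof -
  define N where "N = min L (nat \<lfloor>2 * pi / x\<rfloor>)"
  have "cdf_sum L x = (\<Sum>n\<in>{0..N}. real (L choose n) * coef n * (max 0 (1 - real n * x / (2*pi))) ^ (L - 1))"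
    unfolding cdf_sum_def N_def[symmetric]
  proof (intro sum.cong refl)
    fix n assume n: "n \<in> {0..N}"
    have "real n \<le> 2 * pi / x"
    proof -
      have "n \<le> nat \<lfloor>2 * pi / x\<rfloor>" using n by (simp add: N_def)
      hence "real n \<le> real (nat \<lfloor>2 * pi / x\<rfloor>)" by simp
      also have "\<dots> \<le> 2 * pi / x" using assms by (simp add: of_nat_nat)
      finally show ?thesis .
    qed
    hence "real n * x \<le> 2 * pi" using assms by (simp add: field_simps)
    hence "0 \<le> 1 - real n * x / (2*pi)" by (simp add: field_simps)
    thus "(-1::real) powi (int n - 1) * real (L choose n) * (real n - 1) * (1 - real n * x / (2 * pi)) ^ (L - 1)
        = real (L choose n) * coef n * (max 0 (1 - real n * x / (2*pi))) ^ (L - 1)"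
      by (simp add: coef_def)
  qed
  also have "\<dots> = (\<Sum>n\<le>L. real (L choose n) * coef n * (max 0 (1 - real n * x / (2*pi))) ^ (L - 1))"
  proof (rule sum.mono_neutral_left)
    show "{0..N} \<subseteq> {..L}" by (auto simp: N_def)
  next
    show "\<forall>n\<in>{..L} - {0..N}. real (L choose n) * coef n * (max 0 (1 - real n * x / (2*pi))) ^ (L - 1) = 0"
    proof
      fix n assume n: "n \<in> {..L} - {0..N}"
      hence "n > nat \<lfloor>2 * pi / x\<rfloor>" by (auto simp: N_def)
      hence "real n > 2 * pi / x"
        by (metis floor_less_iff less_nat_zero_code nat_less_iff of_int_of_nat_eq of_nat_0_le_iff
            not_less order.strict_trans1)
      hence "real n * x > 2 * pi" using assms by (simp add: field_simps)
      hence "max 0 (1 - real n * x / (2*pi)) = 0" by (simp add: field_simps)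
      thus "real (L choose n) * coef n * (max 0 (1 - real n * x / (2*pi))) ^ (L - 1) = 0"
        using assms by simp
    qed
  qed auto
  finally show ?thesis ..
qed


lemma length_filter_sort: "length (filter P (sort xs)) = length (filter P xs)"
  by (simp add: filter_sort)

lemma sort_nth_le_iff:
  fixes xs :: "real list"
  assumes "j < length xs"
  shows "(sort xs ! j \<le> t) \<longleftrightarrow> j < length (filter (\<lambda>z. z \<le> t) xs)"
proof -
  define ys where "ys = sort xs"
  have s: "sorted ys" and l: "length ys = length xs" by (auto simp: ys_def)
  have c: "length (filter (\<lambda>z. z \<le> t) xs) = card {k. k < length ys \<and> ys ! k \<le> t}"
    unfolding length_filter_sort[of _ xs, symmetric] ys_def by (rule length_filter_conv_card)
  show ?thesis
  proof
    assume h: "sort xs ! j \<le> t"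
    have "{0..j} \<subseteq> {k. k < length ys \<and> ys ! k \<le> t}"
    proof
      fix k assume "k \<in> {0..j}"
      hence "k \<le> j" by simp
      hence "ys ! k \<le> ys ! j" using s assms l by (intro sorted_nth_mono) auto
      thus "k \<in> {k. k < length ys \<and> ys ! k \<le> t}" using h \<open>k \<le> j\<close> assms l ys_def by auto
    qed
    from card_mono[OF _ this] show "j < length (filter (\<lambda>z. z \<le> t) xs)" unfolding c by simp
  next
    assume h: "j < length (filter (\<lambda>z. z \<le> t) xs)"
    show "sort xs ! j \<le> t"
    proof (rule ccontr)
      assume a: "\<not> sort xs ! j \<le> t"
      have "{k. k < length ys \<and> ys ! k \<le> t} \<subseteq> {0..<j}"
      proof
        fix k assume k: "k \<in> {k. k < length ys \<and> ys ! k \<le> t}"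
        show "k \<in> {0..<j}"
        proof (rule ccontr)
          assume "k \<notin> {0..<j}"
          hence "j \<le> k" by simp
          hence "ys ! j \<le> ys ! k" using s k by (intro sorted_nth_mono) auto
          thus False using a k ys_def by auto
        qed
      qed
      from card_mono[OF _ this] h show False unfolding c by simp
    qed
  qed
qed

lemma sort_nth_less_iff:
  fixes xs :: "real list"
  assumes "j < length xs"
  shows "(sort xs ! j < t) \<longleftrightarrow> j < length (filter (\<lambda>z. z < t) xs)"
proof -
  define ys where "ys = sort xs"
  have s: "sorted ys" and l: "length ys = length xs" by (auto simp: ys_def)
  have c: "length (filter (\<lambda>z. z < t) xs) = card {k. k < length ys \<and> ys ! k < t}"
    unfolding length_filter_sort[of _ xs, symmetric] ys_def by (rule length_filter_conv_card)
  show ?thesis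
  proof
    assume h: "sort xs ! j < t"
    have "{0..j} \<subseteq> {k. k < length ys \<and> ys ! k < t}"
    proof
      fix k assume "k \<in> {0..j}"
      hence "k \<le> j" by simp
      hence "ys ! k \<le> ys ! j" using s assms l by (intro sorted_nth_mono) auto
      thus "k \<in> {k. k < length ys \<and> ys ! k < t}" using h \<open>k \<le> j\<close> assms l ys_def by auto
    qed
    from card_mono[OF _ this] show "j < length (filter (\<lambda>z. z < t) xs)" unfolding c by simp
  next
    assume h: "j < length (filter (\<lambda>z. z < t) xs)"
    show "sort xs ! j < t"
    proof (rule ccontr)
      assume a: "\<not> sort xs ! j < t"
      have "{k. k < length ys \<and> ys ! k < t} \<subseteq> {0..<j}"
      proof
        fix k assume k: "k \<in> {k. k < length ys \<and> ys ! k < t}"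
        show "k \<in> {0..<j}"
        proof (rule ccontr)
          assume "k \<notin> {0..<j}"
          hence "j \<le> k" by simp
          hence "ys ! j \<le> ys ! k" using s k by (intro sorted_nth_mono) auto
          thus False using a k ys_def by auto
        qed
      qed
      from card_mono[OF _ this] h show False unfolding c by simp
    qed
  qed
qed


lemma gaps_nonneg:
  assumes L: "L \<ge> 2" and rng: "\<And>k. k < L \<Longrightarrow> th k \<in> {0..<2*pi}" and k: "k < L"
  shows "0 \<le> gapf L th k"
proof -
  define xs where "xs = sorted_angles L th"
  have r: "\<And>i. i < L \<Longrightarrow> xs ! i \<in> {0..<2*pi}"
    using sorted_angles_range[OF rng] by (simp add: xs_def)
  show ?thesis
  proof (cases "k < L - 1")
    case True
    have "xs ! k \<le> xs ! (k+1)" using True sorted_sorted_angles[of L th]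
      by (intro sorted_nth_mono) (auto simp: xs_def)
    thus ?thesis using True by (simp add: gapf_def xs_def[symmetric] Let_def)
  next
    case False
    have "xs ! (L-1) < 2*pi" "0 \<le> xs ! 0" using r[of "L-1"] r[of 0] L by auto
    thus ?thesis using False by (simp add: gapf_def xs_def[symmetric] Let_def)
  qed
qed

lemma gaps_sum:
  assumes L: "L \<ge> 2"
  shows "(\<Sum>k<L. gapf L th k) = 2*pi"
proof -
  define xs where "xs = sorted_angles L th"
  have "{..<L} = insert (L-1) {..<L-1}" using L by auto
  hence "(\<Sum>k<L. gapf L th k) = gapf L th (L-1) + (\<Sum>k<L-1. gapf L th k)" by simp
  also have "(\<Sum>k<L-1. gapf L th k) = (\<Sum>k<L-1. xs ! Suc k - xs ! k)"
    by (intro sum.cong) (auto simp: gapf_def xs_def[symmetric] Let_def)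
  also have "\<dots> = xs ! (L-1) - xs ! 0" by (rule sum_lessThan_telescope)
  also have "gapf L th (L-1) = 2*pi - (xs ! (L-1) - xs ! 0)" by (simp add: gapf_def xs_def[symmetric] Let_def)
  finally show ?thesis by simp
qed

lemma g2_eq: "L \<ge> 2 \<Longrightarrow> second_largest_angle L th = sort (map (gapf L th) [0..<L]) ! (L - 2)"
  by (simp add: second_largest_angle_def internodal_eq)

lemma g2_le_iff_count:
  assumes L: "L \<ge> 2"
  shows "second_largest_angle L th \<le> x \<longleftrightarrow> length (filter (\<lambda>g. x < g) (internodal_angles L th)) \<le> 1"
proof -
  have len: "length (internodal_angles L th) = L" using L by (simp add: internodal_eq)
  have "second_largest_angle L th \<le> x \<longleftrightarrow> L - 2 < length (filter (\<lambda>z. z \<le> x) (internodal_angles L th))"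
    unfolding second_largest_angle_def using L len by (intro sort_nth_le_iff) auto
  moreover have "length (filter (\<lambda>z. z \<le> x) (internodal_angles L th)) + length (filter (\<lambda>g. x < g) (internodal_angles L th)) = L"
    using sum_length_filter_compl[of "\<lambda>z. z \<le> x" "internodal_angles L th"] len by (simp add: not_le)
  ultimately show ?thesis using L by linarith
qed

lemma g2_range:
  assumes L: "L \<ge> 2" and rng: "\<And>k. k < L \<Longrightarrow> th k \<in> {0..<2*pi}"
  shows "0 \<le> second_largest_angle L th" "second_largest_angle L th \<le> pi"
proof -
  have mem: "second_largest_angle L th \<in> set (internodal_angles L th)"
  proof -
    have "second_largest_angle L th \<in> set (sort (internodal_angles L th))"
      unfolding second_largest_angle_def using L by (intro nth_mem) (simp add: internodal_eq)
    thus ?thesis by simp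
  qed
  thus "0 \<le> second_largest_angle L th" using L gaps_nonneg[OF L rng] by (auto simp: internodal_eq)
  show "second_largest_angle L th \<le> pi"
  proof (rule ccontr)
    assume "\<not> second_largest_angle L th \<le> pi"
    hence "\<not> length (filter (\<lambda>g. pi < g) (internodal_angles L th)) \<le> 1"
      using g2_le_iff_count[OF L] by blast
    moreover have "{i. i < L \<and> pi < map (gapf L th) [0..<L] ! i} = {k. k < L \<and> pi < gapf L th k}" by auto
    ultimately have "2 \<le> card {k. k < L \<and> pi < gapf L th k}"
      using L by (simp add: internodal_eq length_filter_conv_card)
    then obtain k1 k2 where k: "k1 < L" "k2 < L" "k1 \<noteq> k2" "pi < gapf L th k1" "pi < gapf L th k2"
    proof -
      assume h: "\<And>k1 k2. k1 < L \<Longrightarrow> k2 < L \<Longrightarrow> k1 \<noteq> k2 \<Longrightarrow> pi < gapf L th k1 \<Longrightarrow> pi < gapf L th k2 \<Longrightarrow> thesis"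
      assume "2 \<le> card {k. k < L \<and> pi < gapf L th k}"
      then obtain A where "A \<subseteq> {k. k < L \<and> pi < gapf L th k}" "card A = 2"
        by (metis obtain_subset_with_card_n)
      then obtain k1 k2 where "A = {k1, k2}" "k1 \<noteq> k2" by (metis card_2_iff)
      thus thesis using h \<open>A \<subseteq> _\<close> by auto
    qed
    have "gapf L th k1 + gapf L th k2 = (\<Sum>k\<in>{k1,k2}. gapf L th k)" using k by simp
    also have "\<dots> \<le> (\<Sum>k<L. gapf L th k)"
      using k gaps_nonneg[OF L rng] by (intro sum_mono2) auto
    also have "\<dots> = 2*pi" by (rule gaps_sum[OF L])
    finally show False using k by simp
  qed
qed

lemma g2_is_diff:
  assumes L: "L \<ge> 2"
  shows "\<exists>i<L. \<exists>j<L. second_largest_angle L th = th j - th i \<or> second_largest_angle L th = 2*pi - (th j - th i)"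
proof -
  define xs where "xs = sorted_angles L th"
  have ix: "\<exists>i<L. xs ! m = th i" if "m < L" for m
  proof -
    have "xs ! m \<in> set xs" using that by (simp add: xs_def)
    thus ?thesis by (auto simp: xs_def set_sorted_angles)
  qed
  have "second_largest_angle L th \<in> set (sort (internodal_angles L th))"
    unfolding second_largest_angle_def using L by (intro nth_mem) (simp add: internodal_eq)
  hence "second_largest_angle L th \<in> set (internodal_angles L th)" by simp
  then obtain k where k: "k < L" "second_largest_angle L th = gapf L th k" using L by (auto simp: internodal_eq)
  show ?thesis
  proof (cases "k < L - 1")
    case True
    have kk: "k < L" "k + 1 < L" using True by auto
    obtain i where "i < L" "xs ! k = th i" using ix[OF kk(1)] by auto
    moreover obtain j where "j < L" "xs ! (k+1) = th j" using ix[OF kk(2)] by auto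
    ultimately show ?thesis using k True by (auto simp: gapf_def xs_def[symmetric] Let_def)
  next
    case False
    obtain i j where "i < L" "j < L" "xs ! 0 = th i" "xs ! (L-1) = th j" using ix[of 0] ix[of "L-1"] L by auto
    thus ?thesis using k False by (auto simp: gapf_def xs_def[symmetric] Let_def)
  qed
qed

lemma g2_le_iff:
  assumes L: "L \<ge> 2" and rng: "\<And>k. k < L \<Longrightarrow> th k \<in> {0..<2*pi}" and inj: "inj_on th {..<L}"
  shows "second_largest_angle L th \<le> x \<longleftrightarrow>
     card {i. i < L \<and> (\<forall>j<L. j \<noteq> i \<longrightarrow> x < fwd (th i) (th j))} \<le> 1"
  using g2_le_iff_count[OF L] count_gaps[OF L rng inj] by simp


lemma length_filter_map_upt:
  "real (length (filter P (map g [0..<n]))) = (\<Sum>k<n. if P (g k) then 1 else 0)"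
  by (induction n) auto

lemma sort_nth_measurable:
  fixes f :: "nat \<Rightarrow> 'a \<Rightarrow> real"
  assumes f: "\<And>k. k < n \<Longrightarrow> f k \<in> borel_measurable M" and j: "j < n"
  shows "(\<lambda>w. sort (map (\<lambda>k. f k w) [0..<n]) ! j) \<in> borel_measurable M"
proof (rule borel_measurable_iff_le[THEN iffD2], intro allI)
  fix a :: real
  have meas: "(\<lambda>w. \<Sum>k<n. if f k w \<le> a then 1 else 0 :: real) \<in> borel_measurable M"
  proof (intro borel_measurable_sum)
    fix k assume "k \<in> {..<n}"
    hence fk: "f k \<in> borel_measurable M" using f by auto
    have "{w \<in> space M. f k w \<le> a} \<in> sets M" using fk by (simp add: borel_measurable_iff_le)
    thus "(\<lambda>w. if f k w \<le> a then 1 else 0 :: real) \<in> borel_measurable M"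
      by (intro measurable_If) auto
  qed
  have "{w \<in> space M. sort (map (\<lambda>k. f k w) [0..<n]) ! j \<le> a} =
      {w \<in> space M. real j < (\<Sum>k<n. if f k w \<le> a then 1 else 0 :: real)}"
  proof (intro Collect_cong conj_cong refl)
    fix w
    have "sort (map (\<lambda>k. f k w) [0..<n]) ! j \<le> a \<longleftrightarrow>
        j < length (filter (\<lambda>z. z \<le> a) (map (\<lambda>k. f k w) [0..<n]))"
      using j by (intro sort_nth_le_iff) simp
    also have "\<dots> \<longleftrightarrow> real j < real (length (filter (\<lambda>z. z \<le> a) (map (\<lambda>k. f k w) [0..<n])))"
      by simp
    also have "\<dots> \<longleftrightarrow> real j < (\<Sum>k<n. if f k w \<le> a then 1 else 0 :: real)"
      by (simp only: length_filter_map_upt)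
    finally show "sort (map (\<lambda>k. f k w) [0..<n]) ! j \<le> a \<longleftrightarrow>
        real j < (\<Sum>k<n. if f k w \<le> a then 1 else 0 :: real)" .
  qed
  also have "\<dots> \<in> sets M" using meas by (simp add: borel_measurable_iff_greater)
  finally show "{w \<in> space M. sort (map (\<lambda>k. f k w) [0..<n]) ! j \<le> a} \<in> sets M" .
qed

lemma comp_meas:
  fixes L :: nat
  assumes "k < L"
  shows "(\<lambda>th. th k) \<in> borel_measurable (PiM {0..<L} (\<lambda>_. U))"
proof -
  have "(\<lambda>th. th k) \<in> measurable (PiM {0..<L} (\<lambda>_. U)) U"
    using assms by (intro measurable_component_singleton) auto
  moreover have "measurable (PiM {0..<L} (\<lambda>_. U)) U = measurable (PiM {0..<L} (\<lambda>_. U)) borel"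
    by (rule measurable_cong_sets) auto
  ultimately show ?thesis by simp
qed

lemma sorted_angles_meas:
  fixes L :: nat
  assumes "m < L"
  shows "(\<lambda>th. sorted_angles L th ! m) \<in> borel_measurable (PiM {0..<L} (\<lambda>_. U))"
  unfolding sorted_angles_def using assms comp_meas
  by (intro sort_nth_measurable[where f="\<lambda>k th. th k", simplified]) auto

lemma gapf_meas:
  assumes "L \<ge> 2"
  shows "(\<lambda>th. gapf L th k) \<in> borel_measurable (PiM {0..<L} (\<lambda>_. U))"
proof (cases "k < L - 1")
  case True
  have m1: "(\<lambda>th. sorted_angles L th ! (Suc k)) \<in> borel_measurable (PiM {0..<L} (\<lambda>_. U))"
    "(\<lambda>th. sorted_angles L th ! k) \<in> borel_measurable (PiM {0..<L} (\<lambda>_. U))"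
    using True by (auto intro: sorted_angles_meas)
  have e: "(\<lambda>th. gapf L th k) = (\<lambda>th. sorted_angles L th ! (Suc k) - sorted_angles L th ! k)"
    using True by (simp add: gapf_def Let_def fun_eq_iff)
  show ?thesis unfolding e using m1 by (rule borel_measurable_diff)
next
  case False
  have m1: "(\<lambda>th. sorted_angles L th ! (L-1)) \<in> borel_measurable (PiM {0..<L} (\<lambda>_. U))"
    "(\<lambda>th. sorted_angles L th ! 0) \<in> borel_measurable (PiM {0..<L} (\<lambda>_. U))"
    using assms by (auto intro: sorted_angles_meas)
  have e: "(\<lambda>th. gapf L th k) = (\<lambda>th. 2 * pi - (sorted_angles L th ! (L-1) - sorted_angles L th ! 0))"
    using False by (simp add: gapf_def Let_def fun_eq_iff)
  show ?thesis unfolding e using m1 by (intro borel_measurable_diff borel_measurable_const)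
qed

lemma g2_meas:
  assumes "L \<ge> 2"
  shows "(\<lambda>th. second_largest_angle L th) \<in> borel_measurable (PiM {0..<L} (\<lambda>_. U))"
proof -
  have "(\<lambda>th. sort (map (\<lambda>k. gapf L th k) [0..<L]) ! (L - 2)) \<in> borel_measurable (PiM {0..<L} (\<lambda>_. U))"
    using assms gapf_meas[OF assms] by (intro sort_nth_measurable) auto
  moreover have "(\<lambda>th. second_largest_angle L th) = (\<lambda>th. sort (map (\<lambda>k. gapf L th k) [0..<L]) ! (L - 2))"
    using assms by (simp add: g2_eq)
  ultimately show ?thesis by simp
qed

lemma null_coord:
  fixes K :: "'i set"
  assumes finK: "finite K" and j: "j \<in> K" and N: "N \<in> sets (PiM K (\<lambda>_. U))"
    and B: "\<And>y. y \<in> space (PiM (K - {j}) (\<lambda>_. U)) \<Longrightarrow>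
          \<exists>B\<in>sets borel. emeasure U B = 0 \<and> (\<forall>t. y(j := t) \<in> N \<longleftrightarrow> t \<in> B)"
  shows "emeasure (PiM K (\<lambda>_. U)) N = 0"
proof -
  interpret product_sigma_finite "\<lambda>_::'i. U"
    unfolding product_sigma_finite_def using sigma_finite_U by simp
  have eqK: "PiM K (\<lambda>_. U) = PiM (insert j (K - {j})) (\<lambda>_. U)" using j by (simp add: insert_absorb)
  have N': "N \<in> sets (PiM (insert j (K - {j})) (\<lambda>_. U))" using N unfolding eqK .
  have "emeasure (PiM K (\<lambda>_. U)) N = (\<integral>\<^sup>+y. indicator N y \<partial>PiM (insert j (K - {j})) (\<lambda>_. U))"
    unfolding eqK using N' by (rule nn_integral_indicator[symmetric])
  also have "\<dots> = (\<integral>\<^sup>+y. \<integral>\<^sup>+t. indicator N (y(j := t)) \<partial>U \<partial>PiM (K - {j}) (\<lambda>_. U))"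
    using N' finK by (intro product_nn_integral_insert) auto
  also have "\<dots> = (\<integral>\<^sup>+y. 0 \<partial>PiM (K - {j}) (\<lambda>_. U))"
  proof (intro nn_integral_cong)
    fix y assume y: "y \<in> space (PiM (K - {j}) (\<lambda>_. U))"
    obtain Bs where Bs: "Bs \<in> sets borel" "emeasure U Bs = 0" "\<And>t. y(j := t) \<in> N \<longleftrightarrow> t \<in> Bs"
      using B[OF y] by blast
    have "(\<integral>\<^sup>+t. indicator N (y(j := t)) \<partial>U) = (\<integral>\<^sup>+t. indicator Bs t \<partial>U)"
      by (intro nn_integral_cong) (simp add: indicator_def Bs(3))
    also have "\<dots> = 0" using Bs by simp
    finally show "(\<integral>\<^sup>+t. indicator N (y(j := t)) \<partial>U) = 0" .
  qed
  finally show ?thesis by simp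
qed

lemma U_point: "emeasure U {p} = 0"
proof -
  have "emeasure U {p} = emeasure lborel ({0..<2*pi} \<inter> {p}) / ennreal (2*pi)" by (rule emeasure_U) simp
  also have "emeasure lborel ({0..<2*pi} \<inter> {p}) = 0"
  proof -
    have "emeasure lborel ({0..<2*pi} \<inter> {p}) \<le> emeasure lborel {p..p}" by (intro emeasure_mono) auto
    thus ?thesis by simp
  qed
  finally show ?thesis by simp
qed

lemma U_outside: "emeasure U (- {0..<2*pi}) = 0"
proof -
  have "emeasure U (- {0..<2*pi}) = emeasure lborel ({0..<2*pi} \<inter> - {0..<2*pi}) / ennreal (2*pi)"
    by (rule emeasure_U) simp
  thus ?thesis by simp
qed

lemma null_range:
  fixes L :: nat
  assumes "k < L"
  shows "{th \<in> space (PiM {0..<L} (\<lambda>_. U)). \<not> (0 \<le> th k \<and> th k < 2*pi)} \<in> null_sets (PiM {0..<L} (\<lambda>_. U))"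
proof -
  have k: "k \<in> {0..<L}" using assms by simp
  have m: "{th \<in> space (PiM {0..<L} (\<lambda>_. U)). \<not> (0 \<le> th k \<and> th k < 2*pi)} \<in> sets (PiM {0..<L} (\<lambda>_. U))"
    using comp_meas[OF assms] by measurable
  show ?thesis
  proof (rule null_setsI[OF null_coord[OF _ k m] m])
    fix y assume y: "y \<in> space (PiM ({0..<L} - {k}) (\<lambda>_. U))"
    have "y(k := t) \<in> space (PiM {0..<L} (\<lambda>_. U))" for t
      using y k by (auto simp: space_PiM PiE_def extensional_def)
    thus "\<exists>B\<in>sets borel. emeasure U B = 0 \<and>
      (\<forall>t. y(k := t) \<in> {th \<in> space (PiM {0..<L} (\<lambda>_. U)). \<not> (0 \<le> th k \<and> th k < 2*pi)} \<longleftrightarrow> t \<in> B)"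
      by (intro bexI[of _ "- {0..<2*pi}"]) (auto simp: U_outside)
  qed simp
qed

lemma null_diff:
  fixes L :: nat
  assumes "i < L" "j < L" "i \<noteq> j"
  shows "{th \<in> space (PiM {0..<L} (\<lambda>_. U)). th j - th i = c} \<in> null_sets (PiM {0..<L} (\<lambda>_. U))"
proof -
  have jK: "j \<in> {0..<L}" using assms by simp
  have m: "{th \<in> space (PiM {0..<L} (\<lambda>_. U)). th j - th i = c} \<in> sets (PiM {0..<L} (\<lambda>_. U))"
    using comp_meas[OF assms(1)] comp_meas[OF assms(2)] by measurable
  show ?thesis
  proof (rule null_setsI[OF null_coord[OF _ jK m] m])
    fix y assume y: "y \<in> space (PiM ({0..<L} - {j}) (\<lambda>_. U))"
    have sp: "y(j := t) \<in> space (PiM {0..<L} (\<lambda>_. U))" for t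
      using y jK by (auto simp: space_PiM PiE_def extensional_def)
    show "\<exists>B\<in>sets borel. emeasure U B = 0 \<and>
      (\<forall>t. y(j := t) \<in> {th \<in> space (PiM {0..<L} (\<lambda>_. U)). th j - th i = c} \<longleftrightarrow> t \<in> B)"
      using sp assms by (intro bexI[of _ "{y i + c}"]) (auto simp: U_point)
  qed simp
qed


lemma core_cdf:
  fixes L :: nat and x :: real
  assumes L: "L \<ge> 2" and xpos: "0 < x" and x2: "x < 2*pi"
  shows "measure (PiM {0..<L} (\<lambda>_. U)) {th \<in> space (PiM {0..<L} (\<lambda>_. U)). second_largest_angle L th \<le> x}
     = cdf_sum L x"
proof -
  define P where "P = PiM {0..<L} (\<lambda>_::nat. U)"
  define K where "K = {0..<L}"
  interpret P: prob_space P unfolding P_def by (intro prob_space_PiM prob_space_U)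
  have finK: "finite K" by (simp add: K_def)
  have cK: "card K = L" by (simp add: K_def)
  define S where "S th = {i \<in> K. (\<forall>k\<in>K. 0 \<le> th k \<and> th k < 2*pi) \<and> (\<forall>j\<in>K. j \<noteq> i \<longrightarrow> x < fwd (th i) (th j))}"
    for th :: "nat \<Rightarrow> real"
  define EE where "EE I = (if I = {} then space P else Ev x I K)" for I
  have EE_sets: "EE I \<in> sets P" if "I \<subseteq> K" for I
    using that finK by (auto simp: EE_def P_def K_def intro: Ev_sets)
  have EE_mem: "th \<in> EE I \<longleftrightarrow> I \<subseteq> S th" if "th \<in> space P" "I \<subseteq> K" for th I
  proof (cases "I = {}")
    case True thus ?thesis using that by (simp add: EE_def)
  next
    case False
    thus ?thesis using that by (auto simp: EE_def Ev_def S_def P_def K_def)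
  qed
  have EE_meas: "measure P (EE I) = (max 0 (1 - real (card I) * x / (2*pi))) ^ (L - 1)" if "I \<subseteq> K" for I
  proof (cases "I = {}")
    case True
    thus ?thesis by (simp add: EE_def P.prob_space)
  next
    case False
    have fI: "finite I" using that finK by (rule finite_subset)
    have eq: "I \<union> (K - I) = K" using that by auto
    have "emeasure P (EE I) = ennreal ((max 0 (1 - real (card I) * x / (2*pi))) ^ (card K - 1))"
      using Ev_emeasure[OF fI False _ _ xpos x2, of "K - I"] finK False
      unfolding eq by (simp add: EE_def P_def K_def)
    thus ?thesis using cK by (simp add: P.emeasure_eq_measure)
  qed
  have AEr: "AE th in P. \<forall>k\<in>{..<L}. 0 \<le> th k \<and> th k < 2*pi"
  proof (rule AE_finite_allI)
    fix k assume "k \<in> {..<L}"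
    hence "k < L" by simp
    from null_range[OF this] show "AE th in P. 0 \<le> th k \<and> th k < 2*pi"
      unfolding P_def by (rule AE_I') auto
  qed simp
  have AEi: "AE th in P. \<forall>p\<in>{..<L} \<times> {..<L}. fst p \<noteq> snd p \<longrightarrow> th (snd p) - th (fst p) \<noteq> 0"
  proof (rule AE_finite_allI)
    fix p assume p: "p \<in> {..<L} \<times> {..<L}"
    show "AE th in P. fst p \<noteq> snd p \<longrightarrow> th (snd p) - th (fst p) \<noteq> 0"
    proof (cases "fst p = snd p")
      case True thus ?thesis by simp
    next
      case False
      have "fst p < L" "snd p < L" using p by auto
      from null_diff[OF this False, of 0]
      have "AE th in P. th (snd p) - th (fst p) \<noteq> 0"
        unfolding P_def by (rule AE_I') auto
      thus ?thesis by simp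
    qed
  qed simp
  have AE_eq: "AE th in P. indicator {th \<in> space P. second_largest_angle L th \<le> x} th =
      (\<Sum>I\<in>Pow K. coef (card I) * indicator (EE I) th)"
    using AEr AEi
  proof (eventually_elim)
    case (elim th)
    show ?case
    proof (cases "th \<in> space P")
      case False
      have "indicator (EE I) th = (0::real)" if "I \<in> Pow K" for I
        using EE_sets[of I] that False sets.sets_into_space by (auto simp: indicator_def)
      thus ?thesis using False by (simp add: indicator_def)
    next
      case True
      have rng: "\<And>k. k < L \<Longrightarrow> th k \<in> {0..<2*pi}" using elim by auto
      have inj: "inj_on th {..<L}"
      proof (rule inj_onI)
        fix i j assume "i \<in> {..<L}" "j \<in> {..<L}" "th i = th j"
        thus "i = j" using elim by (metis (no_types, lifting) SigmaI diff_self fst_conv snd_conv)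
      qed
      have SS: "S th = {i. i < L \<and> (\<forall>j<L. j \<noteq> i \<longrightarrow> x < fwd (th i) (th j))}"
        using rng by (auto simp: S_def K_def)
      have "(\<Sum>I\<in>Pow K. coef (card I) * indicator (EE I) th) =
          (\<Sum>I\<in>Pow K. coef (card I) * (if I \<subseteq> S th then 1 else 0))"
        using EE_mem[OF True] by (intro sum.cong refl) (auto simp: indicator_def)
      also have "\<dots> = (if card (S th) \<le> 1 then 1 else 0)"
        using finK by (intro indicator_identity) (auto simp: S_def)
      also have "card (S th) \<le> 1 \<longleftrightarrow> second_largest_angle L th \<le> x"
        unfolding SS using g2_le_iff[OF L rng inj] by simp
      finally show ?thesis using True by (simp add: indicator_def)
    qed
  qed
  have g2m: "(\<lambda>th. second_largest_angle L th) \<in> borel_measurable P"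
    unfolding P_def by (rule g2_meas[OF L])
  have setm: "{th \<in> space P. second_largest_angle L th \<le> x} \<in> sets P"
    using g2m by measurable
  have "measure P {th \<in> space P. second_largest_angle L th \<le> x} =
      (\<integral>th. indicator {th \<in> space P. second_largest_angle L th \<le> x} th \<partial>P)"
    by (simp add: Int_absorb2)
  also have "\<dots> = (\<integral>th. (\<Sum>I\<in>Pow K. coef (card I) * indicator (EE I) th) \<partial>P)"
  proof (rule integral_cong_AE)
    show "indicator {th \<in> space P. second_largest_angle L th \<le> x} \<in> borel_measurable P"
      using setm by (rule borel_measurable_indicator)
    show "(\<lambda>th. \<Sum>I\<in>Pow K. coef (card I) * indicator (EE I) th) \<in> borel_measurable P"
    proof (intro borel_measurable_sum borel_measurable_times borel_measurable_const)
      fix I assume "I \<in> Pow K"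
      thus "indicator (EE I) \<in> borel_measurable P" using EE_sets by (intro borel_measurable_indicator) auto
    qed
  qed (rule AE_eq)
  also have "\<dots> = (\<Sum>I\<in>Pow K. \<integral>th. coef (card I) * indicator (EE I) th \<partial>P)"
  proof (rule Bochner_Integration.integral_sum)
    fix I assume "I \<in> Pow K"
    thus "integrable P (\<lambda>th. coef (card I) * indicator (EE I) th)"
      using EE_sets by (intro integrable_mult_right integrable_real_indicator) (auto simp: P.emeasure_eq_measure)
  qed
  also have "\<dots> = (\<Sum>I\<in>Pow K. coef (card I) * measure P (EE I))"
  proof (intro sum.cong refl)
    fix I assume "I \<in> Pow K"
    hence "EE I \<subseteq> space P" using EE_sets[of I] sets.sets_into_space[of "EE I" P] by auto
    thus "(\<integral>th. coef (card I) * indicator (EE I) th \<partial>P) = coef (card I) * measure P (EE I)"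
      by (simp add: Int_absorb2)
  qed
  also have "\<dots> = (\<Sum>I\<in>Pow K. coef (card I) * (max 0 (1 - real (card I) * x / (2*pi))) ^ (L - 1))"
    by (intro sum.cong refl) (simp add: EE_meas)
  also have "\<dots> = (\<Sum>n\<le>L. real (L choose n) * (coef n * (max 0 (1 - real n * x / (2*pi))) ^ (L - 1)))"
    using sum_pow_card[OF finK, of "\<lambda>n. coef n * (max 0 (1 - real n * x / (2*pi))) ^ (L - 1)"] cK by simp
  also have "\<dots> = cdf_sum L x"
    using cdf_sum_eq[OF L xpos] by (simp add: mult.assoc)
  finally show ?thesis by (simp add: P_def)
qed


lemma S_val_ge:
  assumes "0 < a"
  shows "ereal a \<le> S_val a L th"
proof -
  define t where "t = sin (second_largest_angle L th)"
  have "t \<le> 1" by (simp add: t_def)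
  show ?thesis
  proof (cases "t > 0")
    case True
    have "a \<le> a / t" using True \<open>t \<le> 1\<close> assms by (simp add: le_divide_eq)
    thus ?thesis using True by (simp add: S_val_def t_def[symmetric])
  next
    case False
    thus ?thesis by (simp add: S_val_def t_def[symmetric])
  qed
qed

lemma event_iff:
  assumes a: "0 < a" and s: "a \<le> s" and g: "0 \<le> g" "g \<le> pi"
  shows "(let t = sin g in if t > 0 then ereal (a / t) else \<infinity>) \<le> ereal s \<longleftrightarrow>
     arcsin (a / s) \<le> g \<and> g \<le> pi - arcsin (a / s)"
proof -
  have s0: "0 < s" using a s by simp
  define q where "q = a / s"
  have q: "0 < q" "q \<le> 1" using a s s0 by (auto simp: q_def field_simps)
  have pb: "arcsin q \<le> pi/2" using arcsin_bounded[of q] q by auto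
  have "(let t = sin g in if t > 0 then ereal (a / t) else \<infinity>) \<le> ereal s \<longleftrightarrow> q \<le> sin g"
  proof (cases "sin g > 0")
    case True
    have "a / sin g \<le> s \<longleftrightarrow> q \<le> sin g" using True s0 by (simp add: q_def field_simps)
    thus ?thesis using True by simp
  next
    case False
    thus ?thesis using q by auto
  qed
  also have "\<dots> \<longleftrightarrow> arcsin q \<le> g \<and> g \<le> pi - arcsin q"
  proof (cases "g \<le> pi/2")
    case True
    have "arcsin q \<le> g \<longleftrightarrow> q \<le> sin g" using q g True by (intro arcsin_le_iff) auto
    thus ?thesis using True pb by auto
  next
    case False
    have "arcsin q \<le> pi - g \<longleftrightarrow> q \<le> sin (pi - g)" using q g False by (intro arcsin_le_iff) auto
    thus ?thesis using False pb by auto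
  qed
  finally show ?thesis by (simp add: q_def)
qed

lemma S_val_le_iff:
  assumes a: "0 < a" and s: "a \<le> s"
  shows "S_val a L th \<le> ereal s \<longleftrightarrow> a / s \<le> sin (second_largest_angle L th)"
proof -
  have s0: "0 < s" using a s by simp
  have q: "0 < a / s" using a s0 by simp
  show ?thesis
  proof (cases "sin (second_largest_angle L th) > 0")
    case True
    have "a / sin (second_largest_angle L th) \<le> s \<longleftrightarrow> a / s \<le> sin (second_largest_angle L th)"
      using True s0 by (simp add: field_simps)
    thus ?thesis using True by (simp add: S_val_def)
  next
    case False
    thus ?thesis using q by (auto simp: S_val_def)
  qed
qed

lemma sorted_angles_restrict: "sorted_angles L (restrict th {0..<L}) = sorted_angles L th"
  unfolding sorted_angles_def by (intro arg_cong[where f=sort] map_cong) auto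

lemma S_val_restrict: "S_val a L (restrict th {0..<L}) = S_val a L th"
  by (simp add: S_val_def second_largest_angle_def internodal_angles_def sorted_angles_restrict)

lemma AE_range:
  fixes L :: nat
  shows "AE th in PiM {0..<L} (\<lambda>_. U). \<forall>k\<in>{..<L}. 0 \<le> th k \<and> th k < 2*pi"
proof (rule AE_finite_allI)
  fix k assume "k \<in> {..<L}"
  hence "k < L" by simp
  from null_range[OF this] show "AE th in PiM {0..<L} (\<lambda>_. U). 0 \<le> th k \<and> th k < 2*pi"
    by (rule AE_I') auto
qed simp

lemma AE_nodiff:
  fixes L :: nat
  shows "AE th in PiM {0..<L} (\<lambda>_. U). \<forall>p\<in>{..<L} \<times> {..<L}. fst p \<noteq> snd p \<longrightarrow> th (snd p) - th (fst p) \<noteq> c"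
proof (rule AE_finite_allI)
  fix p assume p: "p \<in> {..<L} \<times> {..<L}"
  show "AE th in PiM {0..<L} (\<lambda>_. U). fst p \<noteq> snd p \<longrightarrow> th (snd p) - th (fst p) \<noteq> c"
  proof (cases "fst p = snd p")
    case True thus ?thesis by simp
  next
    case False
    have "fst p < L" "snd p < L" using p by auto
    from null_diff[OF this False, of c]
    have "AE th in PiM {0..<L} (\<lambda>_. U). th (snd p) - th (fst p) \<noteq> c"
      by (rule AE_I') auto
    thus ?thesis by simp
  qed
qed simp

lemma main_P:
  fixes L :: nat and a s :: real
  assumes L: "L \<ge> 2" and a: "0 < a" and s: "a \<le> s"
  shows "measure (PiM {0..<L} (\<lambda>_. U)) {th \<in> space (PiM {0..<L} (\<lambda>_. U)). S_val a L th \<le> ereal s}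
     = cdf_sum L (pi - arcsin (a / s)) - cdf_sum L (arcsin (a / s))"
proof -
  define P where "P = PiM {0..<L} (\<lambda>_::nat. U)"
  interpret P: prob_space P unfolding P_def by (intro prob_space_PiM prob_space_U)
  define p where "p = arcsin (a / s)"
  have s0: "0 < s" using a s by simp
  have q: "0 < a / s" "a / s \<le> 1" using a s s0 by (auto simp: field_simps)
  have p0: "0 < p" unfolding p_def using arcsin_less_arcsin[of 0 "a/s"] q by simp
  have p2: "p \<le> pi/2" unfolding p_def using arcsin_bounded[of "a/s"] q by auto
  have g2m[measurable]: "(\<lambda>th. second_largest_angle L th) \<in> borel_measurable P"
    unfolding P_def by (rule g2_meas[OF L])
  define B where "B = {th \<in> space P. S_val a L th \<le> ereal s}"
  define B1 where "B1 = {th \<in> space P. second_largest_angle L th \<le> pi - p}"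
  define B0 where "B0 = {th \<in> space P. second_largest_angle L th < p}"
  define Bp where "Bp = {th \<in> space P. second_largest_angle L th \<le> p}"
  have sinm: "(\<lambda>th. sin (second_largest_angle L th)) \<in> borel_measurable P"
    using g2m by (rule measurable_compose) (rule borel_measurable_continuous_onI, intro continuous_intros)
  have "B = {th \<in> space P. a / s \<le> sin (second_largest_angle L th)}"
    unfolding B_def using S_val_le_iff[OF a s] by auto
  also have "\<dots> \<in> sets P" using sinm by (simp add: borel_measurable_iff_ge)
  finally have Bm: "B \<in> sets P" .
  have B1m: "B1 \<in> sets P" "B0 \<in> sets P" "Bp \<in> sets P" unfolding B1_def B0_def Bp_def
    using g2m by (simp_all add: borel_measurable_iff_le borel_measurable_iff_less)
  have AEr: "AE th in P. \<forall>k\<in>{..<L}. 0 \<le> th k \<and> th k < 2*pi" unfolding P_def by (rule AE_range)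
  have "measure P B = measure P (B1 - B0)"
  proof (rule measure_eq_AE)
    show "AE th in P. th \<in> B \<longleftrightarrow> th \<in> B1 - B0"
      using AEr
    proof eventually_elim
      case (elim th)
      have rng: "\<And>k. k < L \<Longrightarrow> th k \<in> {0..<2*pi}" using elim by auto
      have "S_val a L th \<le> ereal s \<longleftrightarrow> p \<le> second_largest_angle L th \<and> second_largest_angle L th \<le> pi - p"
        unfolding S_val_def p_def using g2_range[OF L rng] a s by (intro event_iff) auto
      thus ?case by (auto simp: B_def B1_def B0_def)
    qed
  qed (use Bm B1m in auto)
  also have "\<dots> = measure P B1 - measure P B0"
    using B1m p2 by (intro P.finite_measure_Diff) (auto simp: B1_def B0_def)
  also have "measure P B0 = measure P Bp"
  proof (rule measure_eq_AE)
    have a1: "AE th in P. \<forall>q\<in>{..<L} \<times> {..<L}. fst q \<noteq> snd q \<longrightarrow> th (snd q) - th (fst q) \<noteq> p"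
      unfolding P_def by (rule AE_nodiff)
    have a2: "AE th in P. \<forall>q\<in>{..<L} \<times> {..<L}. fst q \<noteq> snd q \<longrightarrow> th (snd q) - th (fst q) \<noteq> 2*pi - p"
      unfolding P_def by (rule AE_nodiff)
    show "AE th in P. th \<in> B0 \<longleftrightarrow> th \<in> Bp"
      using a1 a2
    proof eventually_elim
      case (elim th)
      have "second_largest_angle L th \<noteq> p"
      proof
        assume h: "second_largest_angle L th = p"
        obtain i j where ij: "i < L" "j < L"
          "second_largest_angle L th = th j - th i \<or> second_largest_angle L th = 2*pi - (th j - th i)"
          using g2_is_diff[OF L, of th] by blast
        show False
        proof (cases "i = j")
          case True
          thus False using ij h p0 p2 by auto
        next
          case False
          have "(i, j) \<in> {..<L} \<times> {..<L}" using ij by auto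
          thus False using elim ij h False by force
        qed
      qed
      thus ?case by (auto simp: B0_def Bp_def)
    qed
  qed (use B1m in auto)
  also have "measure P B1 = cdf_sum L (pi - p)"
    unfolding B1_def P_def using p0 p2 by (intro core_cdf[OF L]) auto
  also have "measure P Bp = cdf_sum L p"
    unfolding Bp_def P_def using p0 p2 by (intro core_cdf[OF L]) auto
  finally show ?thesis by (simp add: B_def P_def p_def)
qed


lemma B_sets:
  fixes L :: nat
  assumes L: "L \<ge> 2" and a: "0 < a" and s: "a \<le> s"
  shows "{th \<in> space (PiM {0..<L} (\<lambda>_. U)). S_val a L th \<le> ereal s} \<in> sets (PiM {0..<L} (\<lambda>_. U))"
proof -
  have g2m: "(\<lambda>th. second_largest_angle L th) \<in> borel_measurable (PiM {0..<L} (\<lambda>_. U))"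
    by (rule g2_meas[OF L])
  have sinm: "(\<lambda>th. sin (second_largest_angle L th)) \<in> borel_measurable (PiM {0..<L} (\<lambda>_. U))"
    using g2m by (rule measurable_compose) (rule borel_measurable_continuous_onI, intro continuous_intros)
  have "{th \<in> space (PiM {0..<L} (\<lambda>_. U)). S_val a L th \<le> ereal s} =
      {th \<in> space (PiM {0..<L} (\<lambda>_. U)). a / s \<le> sin (second_largest_angle L th)}"
    using S_val_le_iff[OF a s] by auto
  also have "\<dots> \<in> sets (PiM {0..<L} (\<lambda>_. U))" using sinm by (simp add: borel_measurable_iff_ge)
  finally show ?thesis .
qed

theorem theorem1:
  fixes M :: "'w measure" and \<Theta> :: "nat \<Rightarrow> 'w \<Rightarrow> real"
    and L :: nat and \<sigma>r a :: real
  assumes "prob_space M"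
    and "L \<ge> 2" and "\<sigma>r > 0"
    and "prob_space.indep_vars M (\<lambda>_. borel) \<Theta> {0..<L}"
    and "\<And>k. k < L \<Longrightarrow> distr M borel (\<Theta> k) = uniform_measure lborel {0..<2 * pi}"
    and "a = \<sigma>r * sqrt (4 / real L)"
  shows "(AE \<omega> in M. ereal a \<le> S_val a L (\<lambda>k. \<Theta> k \<omega>))
    \<and> (\<forall>s \<ge> a. measure M {\<omega> \<in> space M. S_val a L (\<lambda>k. \<Theta> k \<omega>) \<le> ereal s}
          = cdf_sum L (pi - arcsin (a / s)) - cdf_sum L (arcsin (a / s)))"
proof -
  interpret prob_space M by (rule assms(1))
  have L: "L \<ge> 2" by (rule assms(2))
  have a0: "0 < a" using assms(2,3,6) by simp
  have part1: "AE \<omega> in M. ereal a \<le> S_val a L (\<lambda>k. \<Theta> k \<omega>)"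
    by (intro AE_I2) (simp add: S_val_ge[OF a0])
  define P where "P = PiM {0..<L} (\<lambda>_::nat. U)"
  define X where "X = (\<lambda>\<omega>. \<lambda>k\<in>{0..<L}. \<Theta> k \<omega>)"
  have rv: "random_variable borel (\<Theta> i)" if "i \<in> {0..<L}" for i
    using assms(4) that unfolding indep_vars_def by auto
  have mU: "measurable M U = measurable M borel" by (rule measurable_cong_sets) simp_all
  have Xm: "X \<in> measurable M P"
    unfolding X_def P_def by (rule measurable_restrict) (use rv mU in auto)
  have ne: "{0..<L} \<noteq> {}" using L by auto
  have "distr M (PiM {0..<L} (\<lambda>_. borel)) X = PiM {0..<L} (\<lambda>i. distr M borel (\<Theta> i))"
    using indep_vars_iff_distr_eq_PiM'[OF ne rv] assms(4) unfolding X_def by simp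
  also have "\<dots> = P" unfolding P_def using assms(5) by (intro PiM_cong) (auto simp: U_def)
  finally have d0: "distr M (PiM {0..<L} (\<lambda>_. borel)) X = P" .
  have sP: "sets P = sets (PiM {0..<L} (\<lambda>_. borel))"
    unfolding P_def by (rule sets_PiM_cong) simp_all
  have "distr M P X = distr M (PiM {0..<L} (\<lambda>_. borel)) X"
    by (rule distr_cong[OF refl sP]) simp
  with d0 have dX: "distr M P X = P" by simp
  have part2: "\<forall>s \<ge> a. measure M {\<omega> \<in> space M. S_val a L (\<lambda>k. \<Theta> k \<omega>) \<le> ereal s}
          = cdf_sum L (pi - arcsin (a / s)) - cdf_sum L (arcsin (a / s))"
  proof (intro allI impI)
    fix s assume s: "a \<le> s"
    define B where "B = {th \<in> space P. S_val a L th \<le> ereal s}"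
    have Bm: "B \<in> sets P" unfolding B_def P_def by (rule B_sets[OF L a0 s])
    have "{\<omega> \<in> space M. S_val a L (\<lambda>k. \<Theta> k \<omega>) \<le> ereal s} = X -` B \<inter> space M"
    proof (intro equalityI subsetI)
      fix \<omega> assume "\<omega> \<in> {\<omega> \<in> space M. S_val a L (\<lambda>k. \<Theta> k \<omega>) \<le> ereal s}"
      moreover have "X \<omega> \<in> space P" if "\<omega> \<in> space M" using Xm that by (rule measurable_space)
      ultimately show "\<omega> \<in> X -` B \<inter> space M"
        by (auto simp: B_def X_def S_val_restrict)
    next
      fix \<omega> assume "\<omega> \<in> X -` B \<inter> space M"
      thus "\<omega> \<in> {\<omega> \<in> space M. S_val a L (\<lambda>k. \<Theta> k \<omega>) \<le> ereal s}"
        by (auto simp: B_def X_def S_val_restrict)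
    qed
    hence "measure M {\<omega> \<in> space M. S_val a L (\<lambda>k. \<Theta> k \<omega>) \<le> ereal s} = measure (distr M P X) B"
      using Xm Bm by (simp add: measure_distr)
    also have "\<dots> = measure P B" by (simp add: dX)
    also have "\<dots> = cdf_sum L (pi - arcsin (a / s)) - cdf_sum L (arcsin (a / s))"
      unfolding B_def P_def by (rule main_P[OF L a0 s])
    finally show "measure M {\<omega> \<in> space M. S_val a L (\<lambda>k. \<Theta> k \<omega>) \<le> ereal s}
          = cdf_sum L (pi - arcsin (a / s)) - cdf_sum L (arcsin (a / s))" .
  qed
  show ?thesis using part1 part2 by blast
qed

end
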